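(* In the setting described in the context (not-so-bad trader), the following hold: (i) $pnl=(\mathcal{Q}+J^sq+(1-J^s)Q)^{\theta}_{(0)}-(\mathcal{P}^{nsb}+J^sP^{bad}+(1-J^s)P^{nsb})^{\theta}_{(0)}-h$; (ii) $\mathrm{HVA}=\big(J^s(q-Q-(P^{bad}-P^{nsb}))\big)^{\theta}+D+va(K^\theta)$, where $D_t=\mathbb{E}_t\big[J^s_\theta\big(Q_\theta-(P^{nsb}_\theta-P^{bad}_\theta)\big)\big]$ and $va(K^\theta)_t=\mathcal{Q}_{t\wedge\theta}+Q_{t\wedge\theta}-\mathbb{E}_t[\mathcal{Q}_\theta+Q_\theta]$; (iii) $\mathrm{HVA}_0=q_0-\mathbb{E}_0[\mathcal{Q}_\theta]-(p_0-P^{nsb}_0)-\mathbb{E}_0\big[J^s_\theta(P^{nsb}_\theta-p_\theta)\big]$; (iv) $-pnl+(\mathrm{HVA}-\mathrm{HVA}_0)=-(\mathcal{Q}+Q)^{\theta}_{(0)}+(\mathcal{P}^{nsb}+P^{nsb})^{\theta}_{(0)}+h+D_{(0)}+va(K^\theta)_{(0)}$.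
   Context: Let $(\Omega,\mathcal{A},\mathbb{Q})$ be a probability space with a filtration $\mathfrak{F}=(\mathfrak{F}_t)_{0\le t\le T}$ satisfying the usual conditions; $\mathbb{E}_t$ is conditional expectation given $\mathfrak{F}_t$. All processes are adapted, càdlàg, and integrable enough for the conditional expectations to exist. For an integrable adapted process $X$, $va(X)_t=\mathbb{E}_t[X_T-X_t]$. A cash flow is an optional integrable process $\mathcal{Y}$ with $\mathcal{Y}_0=0$; its fair callable value is $\widetilde{va}(\mathcal{Y})_t=\sup_{\tau\in\mathcal{T}^t}\mathbb{E}_t[\mathcal{Y}_\tau-\mathcal{Y}_t]$, $\mathcal{T}^t$ the set of $[t,T]$-valued stopping times. Notation: $X_{(0)}=X-X_0$; $X^\theta$ is $X$ stopped at $\theta$. Data: a cash flow $\mathcal{Q}$ (callable asset) with $Q=\widetilde{va}(\mathcal{Q})$; $K$ is the drift of $\mathcal{Q}+Q$ (unique nondecreasing integrable predictable process with $K_0=0$ such that $\mathcal{Q}+Q+K$ is a martingale on $[0,T]$); a semimartingale $q$ with $q_T=0$ (trader's model price of the asset); a semimartingale $p$ (trader's price of his current static hedge); a model switch stopping time $\tau_s\in(0,T]$; $J^s=\mathbf{1}_{[0,\tau_s)}$. Hedging cash flows $\mathcal{P}^{bad}$ (hedge held before $\tau_s$) and $\mathcal{P}^{good}$ (hedge prescribed by the fair model), with $P^{bad}=va(\mathcal{P}^{bad})$, and $p_t=P^{bad}_t$ for $t<\tau_s$. The exit time is $\theta=\theta_\star\mathbf{1}_{\theta_\star<\tau_s}+\tau_\star\mathbf{1}_{\theta_\star=\tau_s}$,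 where $\theta_\star\le\tau_s$ is the stopping time at which the trader calls according to his (recalibrated) model if before $\tau_s$, and $\tau_\star$ is the optimal call time in the fair valuation model from $\tau_s$ onward; $J^e=\mathbf{1}_{[0,\theta)}$. The asset is always called with zero value in the model used at call time: $J^s_\theta q_\theta+(1-J^s_\theta)Q_\theta=0$. The hedging cash flow is $$\mathcal{P}^{nsb}=(\mathcal{P}^{bad})^{\tau_s}+(1-J^s)J^s_\theta(\mathcal{P}^{bad}-\mathcal{P}^{bad}_{\tau_s})+(1-J^s)(1-J^s_\theta)(\mathcal{P}^{good}-\mathcal{P}^{good}_{\tau_s}),$$ with fair value $P^{nsb}=va(\mathcal{P}^{nsb})$. $h$ is a martingale with $h=h^\theta$. The profit and loss is $$pnl=(\mathcal{Q}+J^sq+(1-J^s)Q)^{\theta}_{(0)}-(\mathcal{P}^{nsb}+J^sp+(1-J^s)P^{nsb})^{\theta}_{(0)}-h-(1-J^e)\big(J^s_\theta q_\theta+(1-J^s_\theta)Q_\theta\big),$$ and $\mathrm{HVA}=-va(pnl)$. *)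

theory Defs
  imports "HOL-Probability.Probability"
begin

text \<open>Processes are maps
  real \<Rightarrow> 'a \<Rightarrow> real (time first), random times are maps 'a \<Rightarrow> real,
  the filtration is F :: real \<Rightarrow> 'a measure (only used on [0,T]).\<close>

definition cexp :: "'a measure \<Rightarrow> (real \<Rightarrow> 'a measure) \<Rightarrow> real \<Rightarrow> ('a \<Rightarrow> real) \<Rightarrow> 'a \<Rightarrow> real" where
  "cexp M F t f = real_cond_exp M (F t) f"

definition va :: "'a measure \<Rightarrow> (real \<Rightarrow> 'a measure) \<Rightarrow> real \<Rightarrow> (real \<Rightarrow> 'a \<Rightarrow> real) \<Rightarrow> real \<Rightarrow> 'a \<Rightarrow> real" where
  "va M F T X t = cexp M F t (\<lambda>\<omega>. X T \<omega> - X t \<omega>)"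

definition usual_filtration :: "'a measure \<Rightarrow> (real \<Rightarrow> 'a measure) \<Rightarrow> real \<Rightarrow> bool" where
  "usual_filtration M F T \<longleftrightarrow>
     (\<forall>t\<in>{0..T}. subalgebra M (F t)) \<and>
     (\<forall>s t. 0 \<le> s \<longrightarrow> s \<le> t \<longrightarrow> t \<le> T \<longrightarrow> sets (F s) \<subseteq> sets (F t)) \<and>
     (\<forall>t\<in>{0..<T}. sets (F t) = (\<Inter>s\<in>{t<..T}. sets (F s))) \<and>
     (\<forall>N\<in>sets M. measure M N = 0 \<longrightarrow> (\<forall>B. B \<subseteq> N \<longrightarrow> B \<in> sets (F 0)))"

definition stopping_time_on :: "'a measure \<Rightarrow> (real \<Rightarrow> 'a measure) \<Rightarrow> real \<Rightarrow> ('a \<Rightarrow> real) \<Rightarrow> bool" where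
  "stopping_time_on M F T \<sigma> \<longleftrightarrow>
     (\<forall>\<omega>\<in>space M. \<sigma> \<omega> \<in> {0..T}) \<and>
     (\<forall>t\<in>{0..T}. {\<omega>\<in>space M. \<sigma> \<omega> \<le> t} \<in> sets (F t))"

definition stopped_sigma :: "'a measure \<Rightarrow> (real \<Rightarrow> 'a measure) \<Rightarrow> real \<Rightarrow> ('a \<Rightarrow> real) \<Rightarrow> 'a measure" where
  "stopped_sigma M F T \<sigma> = sigma (space M)
     {A \<in> sets M. \<forall>t\<in>{0..T}. A \<inter> {\<omega>\<in>space M. \<sigma> \<omega> \<le> t} \<in> sets (F t)}"

definition adapted :: "'a measure \<Rightarrow> (real \<Rightarrow> 'a measure) \<Rightarrow> real \<Rightarrow> (real \<Rightarrow> 'a \<Rightarrow> real) \<Rightarrow> bool" where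
  "adapted M F T X \<longleftrightarrow> (\<forall>t\<in>{0..T}. X t \<in> borel_measurable (F t))"

definition cadlag_on :: "real \<Rightarrow> (real \<Rightarrow> real) \<Rightarrow> bool" where
  "cadlag_on T f \<longleftrightarrow> (\<forall>t\<in>{0..<T}. (f \<longlongrightarrow> f t) (at_right t)) \<and>
                       (\<forall>t\<in>{0<..T}. \<exists>l. (f \<longlongrightarrow> l) (at_left t))"

definition cadlag_process :: "'a measure \<Rightarrow> real \<Rightarrow> (real \<Rightarrow> 'a \<Rightarrow> real) \<Rightarrow> bool" where
  "cadlag_process M T X \<longleftrightarrow> (\<forall>\<omega>\<in>space M. cadlag_on T (\<lambda>t. X t \<omega>))"

text \<open>standing assumption: integrable enough for the conditional expectations to exist\<close>
definition integrable_at_stopping :: "'a measure \<Rightarrow> (real \<Rightarrow> 'a measure) \<Rightarrow> real \<Rightarrow> (real \<Rightarrow> 'a \<Rightarrow> real) \<Rightarrow> bool" where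
  "integrable_at_stopping M F T X \<longleftrightarrow>
     (\<forall>\<sigma>. stopping_time_on M F T \<sigma> \<longrightarrow> integrable M (\<lambda>\<omega>. X (\<sigma> \<omega>) \<omega>))"

definition regular_process :: "'a measure \<Rightarrow> (real \<Rightarrow> 'a measure) \<Rightarrow> real \<Rightarrow> (real \<Rightarrow> 'a \<Rightarrow> real) \<Rightarrow> bool" where
  "regular_process M F T X \<longleftrightarrow> adapted M F T X \<and> cadlag_process M T X \<and> integrable_at_stopping M F T X"

definition martingale_on :: "'a measure \<Rightarrow> (real \<Rightarrow> 'a measure) \<Rightarrow> real \<Rightarrow> (real \<Rightarrow> 'a \<Rightarrow> real) \<Rightarrow> bool" where
  "martingale_on M F T X \<longleftrightarrow> adapted M F T X \<and> (\<forall>t\<in>{0..T}. integrable M (X t)) \<and>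
     (\<forall>s t. 0 \<le> s \<longrightarrow> s \<le> t \<longrightarrow> t \<le> T \<longrightarrow> (AE \<omega> in M. cexp M F s (X t) \<omega> = X s \<omega>))"

definition local_martingale_on :: "'a measure \<Rightarrow> (real \<Rightarrow> 'a measure) \<Rightarrow> real \<Rightarrow> (real \<Rightarrow> 'a \<Rightarrow> real) \<Rightarrow> bool" where
  "local_martingale_on M F T X \<longleftrightarrow> (\<exists>\<sigma> :: nat \<Rightarrow> 'a \<Rightarrow> real.
     (\<forall>n. stopping_time_on M F T (\<sigma> n)) \<and>
     (\<forall>n. \<forall>\<omega>\<in>space M. \<sigma> n \<omega> \<le> \<sigma> (Suc n) \<omega>) \<and>
     (AE \<omega> in M. \<exists>n. \<sigma> n \<omega> = T) \<and>
     (\<forall>n. martingale_on M F T (\<lambda>t \<omega>. X (min t (\<sigma> n \<omega>)) \<omega>)))"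

definition bounded_variation_on :: "real \<Rightarrow> (real \<Rightarrow> real) \<Rightarrow> bool" where
  "bounded_variation_on T f \<longleftrightarrow> (\<exists>B. \<forall>ts. sorted ts \<longrightarrow> set ts \<subseteq> {0..T} \<longrightarrow>
     (\<Sum>i<length ts - 1. \<bar>f (ts ! Suc i) - f (ts ! i)\<bar>) \<le> B)"

definition semimartingale :: "'a measure \<Rightarrow> (real \<Rightarrow> 'a measure) \<Rightarrow> real \<Rightarrow> (real \<Rightarrow> 'a \<Rightarrow> real) \<Rightarrow> bool" where
  "semimartingale M F T X \<longleftrightarrow> (\<exists>L A.
     local_martingale_on M F T L \<and> cadlag_process M T L \<and>
     adapted M F T A \<and> cadlag_process M T A \<and>
     (\<forall>\<omega>\<in>space M. L 0 \<omega> = 0 \<and> A 0 \<omega> = 0 \<and> bounded_variation_on T (\<lambda>t. A t \<omega>)) \<and>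
     (\<forall>t\<in>{0..T}. \<forall>\<omega>\<in>space M. X t \<omega> = X 0 \<omega> + L t \<omega> + A t \<omega>))"

text \<open>cash flow: optional integrable process with value 0 at time 0 (optionality follows
  from the standing adapted + cadlag assumption)\<close>
definition cash_flow :: "'a measure \<Rightarrow> (real \<Rightarrow> 'a measure) \<Rightarrow> real \<Rightarrow> (real \<Rightarrow> 'a \<Rightarrow> real) \<Rightarrow> bool" where
  "cash_flow M F T Y \<longleftrightarrow> regular_process M F T Y \<and> (\<forall>\<omega>\<in>space M. Y 0 \<omega> = 0)"

definition is_ess_sup :: "'a measure \<Rightarrow> ('a \<Rightarrow> real) set \<Rightarrow> ('a \<Rightarrow> real) \<Rightarrow> bool" where
  "is_ess_sup M S Y \<longleftrightarrow> Y \<in> borel_measurable M \<and>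
     (\<forall>Z\<in>S. AE \<omega> in M. Z \<omega> \<le> Y \<omega>) \<and>
     (\<forall>Y'. Y' \<in> borel_measurable M \<longrightarrow> (\<forall>Z\<in>S. AE \<omega> in M. Z \<omega> \<le> Y' \<omega>) \<longrightarrow>
        (AE \<omega> in M. Y \<omega> \<le> Y' \<omega>))"

definition fair_callable_value :: "'a measure \<Rightarrow> (real \<Rightarrow> 'a measure) \<Rightarrow> real \<Rightarrow> (real \<Rightarrow> 'a \<Rightarrow> real) \<Rightarrow> (real \<Rightarrow> 'a \<Rightarrow> real) \<Rightarrow> bool" where
  "fair_callable_value M F T cY Y \<longleftrightarrow> (\<forall>t\<in>{0..T}. is_ess_sup M
     {cexp M F t (\<lambda>\<omega>. cY (\<tau> \<omega>) \<omega> - cY t \<omega>) | \<tau>. stopping_time_on M F T \<tau> \<and> (\<forall>\<omega>\<in>space M. t \<le> \<tau> \<omega>)}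
     (Y t))"

definition predictable_sets :: "'a measure \<Rightarrow> (real \<Rightarrow> 'a measure) \<Rightarrow> real \<Rightarrow> (real \<times> 'a) set set" where
  "predictable_sets M F T = sigma_sets ({0..T} \<times> space M)
     ({{0} \<times> A | A. A \<in> sets (F 0)} \<union>
      {{s<..t} \<times> A | s t A. 0 \<le> s \<and> s < t \<and> t \<le> T \<and> A \<in> sets (F s)})"

definition predictable :: "'a measure \<Rightarrow> (real \<Rightarrow> 'a measure) \<Rightarrow> real \<Rightarrow> (real \<Rightarrow> 'a \<Rightarrow> real) \<Rightarrow> bool" where
  "predictable M F T X \<longleftrightarrow> (\<forall>B\<in>sets borel.
     {(t, \<omega>) \<in> {0..T} \<times> space M. X t \<omega> \<in> B} \<in> predictable_sets M F T)"

definition is_drift :: "'a measure \<Rightarrow> (real \<Rightarrow> 'a measure) \<Rightarrow> real \<Rightarrow> (real \<Rightarrow> 'a \<Rightarrow> real) \<Rightarrow> (real \<Rightarrow> 'a \<Rightarrow> real) \<Rightarrow> bool" where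
  "is_drift M F T Y K \<longleftrightarrow>
     (\<forall>\<omega>\<in>space M. mono_on {0..T} (\<lambda>t. K t \<omega>) \<and> K 0 \<omega> = 0) \<and>
     (\<forall>t\<in>{0..T}. integrable M (K t)) \<and> predictable M F T K \<and> cadlag_process M T K \<and>
     martingale_on M F T (\<lambda>t \<omega>. Y t \<omega> + K t \<omega>)"

definition stopped :: "(real \<Rightarrow> 'a \<Rightarrow> real) \<Rightarrow> ('a \<Rightarrow> real) \<Rightarrow> real \<Rightarrow> 'a \<Rightarrow> real" where
  "stopped X \<theta> t \<omega> = X (min t (\<theta> \<omega>)) \<omega>"

definition from0 :: "(real \<Rightarrow> 'a \<Rightarrow> real) \<Rightarrow> real \<Rightarrow> 'a \<Rightarrow> real" where
  "from0 X t \<omega> = X t \<omega> - X 0 \<omega>"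

definition ind_before :: "('a \<Rightarrow> real) \<Rightarrow> real \<Rightarrow> 'a \<Rightarrow> real" where
  "ind_before \<sigma> t \<omega> = (if t < \<sigma> \<omega> then 1 else 0)"

definition exit_time :: "('a \<Rightarrow> real) \<Rightarrow> ('a \<Rightarrow> real) \<Rightarrow> ('a \<Rightarrow> real) \<Rightarrow> 'a \<Rightarrow> real" where
  "exit_time \<theta>s \<tau>st \<tau>s \<omega> = (if \<theta>s \<omega> < \<tau>s \<omega> then \<theta>s \<omega> else \<tau>st \<omega>)"

definition nsb_flow :: "(real \<Rightarrow> 'a \<Rightarrow> real) \<Rightarrow> (real \<Rightarrow> 'a \<Rightarrow> real) \<Rightarrow> ('a \<Rightarrow> real) \<Rightarrow> ('a \<Rightarrow> real) \<Rightarrow> real \<Rightarrow> 'a \<Rightarrow> real" where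
  "nsb_flow cPbad cPgood \<tau>s \<theta> t \<omega> =
     stopped cPbad \<tau>s t \<omega>
     + (1 - ind_before \<tau>s t \<omega>) * ind_before \<tau>s (\<theta> \<omega>) \<omega> * (cPbad t \<omega> - cPbad (\<tau>s \<omega>) \<omega>)
     + (1 - ind_before \<tau>s t \<omega>) * (1 - ind_before \<tau>s (\<theta> \<omega>) \<omega>) * (cPgood t \<omega> - cPgood (\<tau>s \<omega>) \<omega>)"

definition pnl_nsb :: "(real \<Rightarrow> 'a \<Rightarrow> real) \<Rightarrow> (real \<Rightarrow> 'a \<Rightarrow> real) \<Rightarrow> (real \<Rightarrow> 'a \<Rightarrow> real) \<Rightarrow>
    (real \<Rightarrow> 'a \<Rightarrow> real) \<Rightarrow> (real \<Rightarrow> 'a \<Rightarrow> real) \<Rightarrow> (real \<Rightarrow> 'a \<Rightarrow> real) \<Rightarrow>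
    (real \<Rightarrow> 'a \<Rightarrow> real) \<Rightarrow> ('a \<Rightarrow> real) \<Rightarrow> ('a \<Rightarrow> real) \<Rightarrow> real \<Rightarrow> 'a \<Rightarrow> real" where
  "pnl_nsb cQ q Q cPnsb p Pnsb h \<tau>s \<theta> t \<omega> =
     from0 (stopped (\<lambda>t \<omega>. cQ t \<omega> + ind_before \<tau>s t \<omega> * q t \<omega> + (1 - ind_before \<tau>s t \<omega>) * Q t \<omega>) \<theta>) t \<omega>
     - from0 (stopped (\<lambda>t \<omega>. cPnsb t \<omega> + ind_before \<tau>s t \<omega> * p t \<omega> + (1 - ind_before \<tau>s t \<omega>) * Pnsb t \<omega>) \<theta>) t \<omega>
     - h t \<omega>
     - (1 - ind_before \<theta> t \<omega>) *
         (ind_before \<tau>s (\<theta> \<omega>) \<omega> * q (\<theta> \<omega>) \<omega> + (1 - ind_before \<tau>s (\<theta> \<omega>) \<omega>) * Q (\<theta> \<omega>) \<omega>)"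

end

theory Submission
  imports Defs
begin

locale fsetting = prob_space M for M :: "'a measure" +
  fixes F :: "real \<Rightarrow> 'a measure" and T :: real
  assumes filt: "usual_filtration M F T" and T_pos: "0 < T"
begin

lemma subalgF: "t \<in> {0..T} \<Longrightarrow> subalgebra M (F t)"
  using filt unfolding usual_filtration_def by auto

lemma space_F[simp]: "t \<in> {0..T} \<Longrightarrow> space (F t) = space M"
  using subalgF unfolding subalgebra_def by auto

lemma sets_F_M: "t \<in> {0..T} \<Longrightarrow> A \<in> sets (F t) \<Longrightarrow> A \<in> sets M"
  using subalgF unfolding subalgebra_def by auto

lemma sets_mono: "0 \<le> s \<Longrightarrow> s \<le> t \<Longrightarrow> t \<le> T \<Longrightarrow> sets (F s) \<subseteq> sets (F t)"
  using filt unfolding usual_filtration_def by auto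

lemma subalg_FF: "0 \<le> s \<Longrightarrow> s \<le> t \<Longrightarrow> t \<le> T \<Longrightarrow> subalgebra (F t) (F s)"
  unfolding subalgebra_def using sets_mono[of s t] by auto

lemma meas_mono: "f \<in> borel_measurable (F s) \<Longrightarrow> 0 \<le> s \<Longrightarrow> s \<le> t \<Longrightarrow> t \<le> T
   \<Longrightarrow> f \<in> borel_measurable (F t)"
  using measurable_from_subalg[OF subalg_FF] by blast

lemma meas_M: "f \<in> borel_measurable (F t) \<Longrightarrow> t \<in> {0..T} \<Longrightarrow> f \<in> borel_measurable M"
  using measurable_from_subalg[OF subalgF] by blast

lemma sfs: "t \<in> {0..T} \<Longrightarrow> sigma_finite_subalgebra M (F t)"
  apply (rule finite_measure_subalgebra_is_sigma_finite)
  unfolding finite_measure_subalgebra_def finite_measure_subalgebra_axioms_def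
  using subalgF finite_measure_axioms by auto

lemma ce_add: "t \<in> {0..T} \<Longrightarrow> integrable M f \<Longrightarrow> integrable M g \<Longrightarrow>
  AE x in M. cexp M F t (\<lambda>x. f x + g x) x = cexp M F t f x + cexp M F t g x"
  unfolding cexp_def using sigma_finite_subalgebra.real_cond_exp_add[OF sfs] by blast

lemma ce_diff: "t \<in> {0..T} \<Longrightarrow> integrable M f \<Longrightarrow> integrable M g \<Longrightarrow>
  AE x in M. cexp M F t (\<lambda>x. f x - g x) x = cexp M F t f x - cexp M F t g x"
  unfolding cexp_def using sigma_finite_subalgebra.real_cond_exp_diff[OF sfs] by blast

lemma ce_cmult: "t \<in> {0..T} \<Longrightarrow> integrable M f \<Longrightarrow>
  AE x in M. cexp M F t (\<lambda>x. c * f x) x = c * cexp M F t f x"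
  unfolding cexp_def using sigma_finite_subalgebra.real_cond_exp_cmult[OF sfs] by blast

lemma ce_F: "t \<in> {0..T} \<Longrightarrow> integrable M f \<Longrightarrow> f \<in> borel_measurable (F t) \<Longrightarrow>
  AE x in M. cexp M F t f x = f x"
  unfolding cexp_def using sigma_finite_subalgebra.real_cond_exp_F_meas[OF sfs] by blast

lemma ce_cong: "t \<in> {0..T} \<Longrightarrow> AE x in M. f x = g x \<Longrightarrow> f \<in> borel_measurable M \<Longrightarrow> g \<in> borel_measurable M \<Longrightarrow>
  AE x in M. cexp M F t f x = cexp M F t g x"
  unfolding cexp_def using sigma_finite_subalgebra.real_cond_exp_cong[OF sfs] by blast

lemma ce_mono: "t \<in> {0..T} \<Longrightarrow> AE x in M. f x \<le> g x \<Longrightarrow> integrable M f \<Longrightarrow> integrable M g \<Longrightarrow>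
  AE x in M. cexp M F t f x \<le> cexp M F t g x"
  unfolding cexp_def using sigma_finite_subalgebra.real_cond_exp_mono[OF sfs] by blast

lemma ce_int: "t \<in> {0..T} \<Longrightarrow> integrable M f \<Longrightarrow> integrable M (cexp M F t f)"
  unfolding cexp_def using sigma_finite_subalgebra.real_cond_exp_int[OF sfs] by blast

lemma ce_meas: "t \<in> {0..T} \<Longrightarrow> cexp M F t f \<in> borel_measurable (F t)"
  unfolding cexp_def by simp

lemma ce_intA: "t \<in> {0..T} \<Longrightarrow> integrable M f \<Longrightarrow> A \<in> sets (F t) \<Longrightarrow>
   (\<integral>x. indicator A x * cexp M F t f x \<partial>M) = (\<integral>x. indicator A x * f x \<partial>M)"
  using sigma_finite_subalgebra.real_cond_exp_intA[OF sfs, of t f A]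
  unfolding cexp_def set_lebesgue_integral_def by simp

lemma ce_charact: "t \<in> {0..T} \<Longrightarrow> integrable M f \<Longrightarrow> integrable M g \<Longrightarrow> g \<in> borel_measurable (F t) \<Longrightarrow>
  (\<And>A. A \<in> sets (F t) \<Longrightarrow> (\<integral>x. indicator A x * f x \<partial>M) = (\<integral>x. indicator A x * g x \<partial>M)) \<Longrightarrow>
  AE x in M. cexp M F t f x = g x"
  unfolding cexp_def
  by (rule sigma_finite_subalgebra.real_cond_exp_charact[OF sfs]) (auto simp: set_lebesgue_integral_def)

end

lemma rc_seq:
  fixes f :: "real \<Rightarrow> real"
  assumes rc: "(f \<longlongrightarrow> f x) (at_right x)" and s: "s \<longlonglongrightarrow> x" and ge: "\<And>n. x \<le> s n"
  shows "(\<lambda>n. f (s n)) \<longlonglongrightarrow> f x"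
proof (rule tendstoI)
  fix e :: real assume e: "0 < e"
  have "eventually (\<lambda>y. dist (f y) (f x) < e) (at_right x)" using rc e by (rule tendstoD)
  then obtain b where b: "b > x" "\<And>y. y > x \<Longrightarrow> y < b \<Longrightarrow> dist (f y) (f x) < e"
    unfolding eventually_at_right_field by auto
  have "eventually (\<lambda>n. s n < b) sequentially" using s b(1) by (rule order_tendstoD)
  then show "eventually (\<lambda>n. dist (f (s n)) (f x) < e) sequentially"
  proof (rule eventually_mono)
    fix n assume "s n < b"
    show "dist (f (s n)) (f x) < e"
    proof (cases "s n = x")
      case True then show ?thesis using e by simp
    next
      case False then show ?thesis using ge[of n] b(2) \<open>s n < b\<close> by simp
    qed
  qed
qed

definition dg :: "real \<Rightarrow> nat \<Rightarrow> ('a \<Rightarrow> real) \<Rightarrow> 'a \<Rightarrow> real" where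
  "dg t n \<rho> \<omega> = t * real_of_int \<lceil>2^n * \<rho> \<omega> / t\<rceil> / 2^n"

lemma dg_ge: "0 < t \<Longrightarrow> \<rho> \<omega> \<le> dg t n \<rho> \<omega>"
proof -
  assume t: "0 < t"
  have h: "2^n * \<rho> \<omega> / t \<le> real_of_int \<lceil>2^n * \<rho> \<omega> / t\<rceil>" by (rule le_of_int_ceiling)
  have "2^n * \<rho> \<omega> / t * t \<le> real_of_int \<lceil>2^n * \<rho> \<omega> / t\<rceil> * t"
    using mult_right_mono[OF h, of t] t by simp
  then have "2^n * \<rho> \<omega> \<le> real_of_int \<lceil>2^n * \<rho> \<omega> / t\<rceil> * t" using t by simp
  then show ?thesis unfolding dg_def by (simp add: field_simps)
qed

lemma dg_le: "0 < t \<Longrightarrow> dg t n \<rho> \<omega> \<le> \<rho> \<omega> + t / 2^n"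
proof -
  assume t: "0 < t"
  have "real_of_int \<lceil>2^n * \<rho> \<omega> / t\<rceil> \<le> 2^n * \<rho> \<omega> / t + 1" by linarith
  then have "t * real_of_int \<lceil>2^n * \<rho> \<omega> / t\<rceil> \<le> 2^n * \<rho> \<omega> + t" using t by (simp add: field_simps)
  then show ?thesis unfolding dg_def by (simp add: field_simps)
qed

lemma dg_le_t: "0 < t \<Longrightarrow> \<rho> \<omega> \<le> t \<Longrightarrow> dg t n \<rho> \<omega> \<le> t"
proof -
  assume t: "0 < t" "\<rho> \<omega> \<le> t"
  have "2^n * \<rho> \<omega> / t \<le> 2^n" using t by (simp add: field_simps)
  then have "\<lceil>2^n * \<rho> \<omega> / t\<rceil> \<le> 2^n" by (metis ceiling_le_iff of_int_numeral of_int_power)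
  then have "real_of_int \<lceil>2^n * \<rho> \<omega> / t\<rceil> \<le> 2^n" by (metis of_int_le_iff of_int_numeral of_int_power)
  then have "t * real_of_int \<lceil>2^n * \<rho> \<omega> / t\<rceil> \<le> t * 2^n" using t by (intro mult_left_mono) auto
  then have "t * real_of_int \<lceil>2^n * \<rho> \<omega> / t\<rceil> / 2^n \<le> t * 2^n / 2^n" by (intro divide_right_mono) auto
  then show ?thesis unfolding dg_def by simp
qed

lemma dg_eq_t: "0 < t \<Longrightarrow> \<rho> \<omega> = t \<Longrightarrow> dg t n \<rho> \<omega> = t"
  unfolding dg_def by simp

lemma dg_lim: "0 < t \<Longrightarrow> (\<lambda>n. dg t n \<rho> \<omega>) \<longlonglongrightarrow> \<rho> \<omega>"
proof -
  assume t: "0 < t"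
  have f: "filterlim (\<lambda>n. (2::real)^n) at_infinity sequentially"
    by (rule filterlim_realpow_sequentially_gt1) simp
  have "(\<lambda>n. \<rho> \<omega> + t / 2^n) \<longlonglongrightarrow> \<rho> \<omega> + 0"
    by (intro tendsto_add tendsto_const tendsto_divide_0[OF tendsto_const f])
  then have h: "(\<lambda>n. \<rho> \<omega> + t / 2^n) \<longlonglongrightarrow> \<rho> \<omega>" by simp
  show ?thesis
  proof (rule tendsto_sandwich[of "\<lambda>_. \<rho> \<omega>" _ _ "\<lambda>n. \<rho> \<omega> + t / 2^n"])
    show "eventually (\<lambda>n. \<rho> \<omega> \<le> dg t n \<rho> \<omega>) sequentially" by (intro always_eventually allI dg_ge[OF t])
    show "eventually (\<lambda>n. dg t n \<rho> \<omega> \<le> \<rho> \<omega> + t / 2^n) sequentially" by (intro always_eventually allI dg_le[OF t])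
  qed (use h in auto)
qed

definition grid :: "real \<Rightarrow> nat \<Rightarrow> real set" where
  "grid t n = (\<lambda>k. t * real k / 2^n) ` {0..2^n}"

lemma finite_grid: "finite (grid t n)" unfolding grid_def by simp

lemma grid_range: "0 \<le> t \<Longrightarrow> v \<in> grid t n \<Longrightarrow> 0 \<le> v \<and> v \<le> t"
proof -
  assume t: "0 \<le> t" "v \<in> grid t n"
  from t(2) obtain k where k: "k \<in> {0..2^n}" "v = t * real k / 2^n" unfolding grid_def by (rule imageE)
  have "real k \<le> real ((2::nat)^n)" using k(1) by (intro of_nat_mono) simp
  then have "real k \<le> 2^n" by simp
  then have "t * real k \<le> t * 2^n" using t by (intro mult_left_mono) auto
  then have "t * real k / 2^n \<le> t * 2^n / 2^n" by (intro divide_right_mono) auto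
  then show ?thesis using k t by simp
qed

lemma dg_in_grid: "0 < t \<Longrightarrow> 0 \<le> \<rho> \<omega> \<Longrightarrow> \<rho> \<omega> \<le> t \<Longrightarrow> dg t n \<rho> \<omega> \<in> grid t n"
proof -
  assume t: "0 < t" "0 \<le> \<rho> \<omega>" "\<rho> \<omega> \<le> t"
  define c where "c = \<lceil>2^n * \<rho> \<omega> / t\<rceil>"
  have "0 \<le> 2^n * \<rho> \<omega> / t" using t by simp
  then have c0: "0 \<le> c" unfolding c_def by simp
  have "2^n * \<rho> \<omega> / t \<le> 2^n" using t by (simp add: field_simps)
  then have "c \<le> 2^n" unfolding c_def by (metis ceiling_le_iff of_int_numeral of_int_power)
  then have "nat c \<le> 2^n" using c0 by (simp add: nat_le_iff)
  then have k: "nat c \<in> {0..2^n}" by simp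
  have r: "real (nat c) = real_of_int c" using c0 by simp
  have "dg t n \<rho> \<omega> = t * real (nat c) / 2^n" unfolding dg_def c_def[symmetric] r ..
  then show ?thesis unfolding grid_def using k by blast
qed

context fsetting
begin

lemma st_range: "stopping_time_on M F T \<rho> \<Longrightarrow> \<omega> \<in> space M \<Longrightarrow> 0 \<le> \<rho> \<omega> \<and> \<rho> \<omega> \<le> T"
  unfolding stopping_time_on_def by auto

lemma st_le: assumes st: "stopping_time_on M F T \<rho>" and u: "u \<in> {0..T}" and su: "s \<le> u"
  shows "{\<omega>\<in>space M. \<rho> \<omega> \<le> s} \<in> sets (F u)"
proof (cases "s < 0")
  case True
  then have eq: "{\<omega>\<in>space M. \<rho> \<omega> \<le> s} = {}" using st_range[OF st] by force
  show ?thesis unfolding eq by (rule sets.empty_sets)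
next
  case False
  then have "{\<omega>\<in>space M. \<rho> \<omega> \<le> s} \<in> sets (F s)" using st su u unfolding stopping_time_on_def by auto
  then show ?thesis using sets_mono[of s u] False su u by auto
qed

lemma st_meas_F: assumes st: "stopping_time_on M F T \<rho>" and u: "u \<in> {0..T}"
  shows "(\<lambda>\<omega>. min u (\<rho> \<omega>)) \<in> borel_measurable (F u)"
proof (rule borel_measurable_iff_le[THEN iffD2], intro allI)
  fix a
  show "{w \<in> space (F u). min u (\<rho> w) \<le> a} \<in> sets (F u)"
  proof (cases "u \<le> a")
    case True
    then have "{w \<in> space (F u). min u (\<rho> w) \<le> a} = space (F u)" by auto
    then show ?thesis by simp
  next
    case False
    then have "{w \<in> space (F u). min u (\<rho> w) \<le> a} = {\<omega>\<in>space M. \<rho> \<omega> \<le> a}" using u by auto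
    then show ?thesis using st_le[OF st u, of a] False by simp
  qed
qed

lemma st_meas: assumes st: "stopping_time_on M F T \<rho>" shows "\<rho> \<in> borel_measurable M"
proof -
  have "(\<lambda>\<omega>. min T (\<rho> \<omega>)) \<in> borel_measurable M" using meas_M[OF st_meas_F[OF st, of T]] T_pos by auto
  moreover have "\<And>\<omega>. \<omega> \<in> space M \<Longrightarrow> min T (\<rho> \<omega>) = \<rho> \<omega>" using st_range[OF st] by auto
  ultimately show ?thesis using measurable_cong[of M "\<lambda>\<omega>. min T (\<rho> \<omega>)" \<rho>] by simp
qed

lemma st_min_const: assumes st: "stopping_time_on M F T \<rho>" and t: "t \<in> {0..T}"
  shows "stopping_time_on M F T (\<lambda>\<omega>. min t (\<rho> \<omega>))"
  unfolding stopping_time_on_def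
proof safe
  fix \<omega> assume "\<omega> \<in> space M" then show "min t (\<rho> \<omega>) \<in> {0..T}" using st_range[OF st] t by auto
next
  fix s assume s: "s \<in> {0..T}"
  show "{\<omega> \<in> space M. min t (\<rho> \<omega>) \<le> s} \<in> sets (F s)"
  proof (cases "t \<le> s")
    case True
    then have "{\<omega> \<in> space M. min t (\<rho> \<omega>) \<le> s} = space (F s)" using s by auto
    then show ?thesis by simp
  next
    case False
    then have "{\<omega> \<in> space M. min t (\<rho> \<omega>) \<le> s} = {\<omega>\<in>space M. \<rho> \<omega> \<le> s}" by auto
    then show ?thesis using st_le[OF st s, of s] by simp
  qed
qed

lemma dg_set: assumes st: "stopping_time_on M F T \<rho>" and t: "0 < t" "t \<le> T"
  and le: "\<forall>\<omega>\<in>space M. \<rho> \<omega> \<le> t" and v: "v \<in> grid t n"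
  shows "{\<omega>\<in>space M. dg t n \<rho> \<omega> = v} \<in> sets (F v)"
proof -
  obtain k where k: "k \<in> {0..2^n}" "v = t * real k / 2^n" using v unfolding grid_def by auto
  have v0: "v \<in> {0..T}" using grid_range[OF _ v] t by auto
  have eq: "{\<omega>\<in>space M. dg t n \<rho> \<omega> = v} =
    {\<omega>\<in>space M. \<rho> \<omega> \<le> v} - {\<omega>\<in>space M. \<rho> \<omega> \<le> t * (real k - 1) / 2^n}"
  proof -
    have "dg t n \<rho> \<omega> = v \<longleftrightarrow> (\<rho> \<omega> \<le> v \<and> \<not> \<rho> \<omega> \<le> t * (real k - 1) / 2^n)" for \<omega>
    proof -
      have "dg t n \<rho> \<omega> = v \<longleftrightarrow> real_of_int \<lceil>2^n * \<rho> \<omega> / t\<rceil> = real k"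
        unfolding dg_def k(2) using t by simp
      also have "\<dots> \<longleftrightarrow> \<lceil>2^n * \<rho> \<omega> / t\<rceil> = int k" by (metis of_int_eq_iff of_int_of_nat_eq)
      also have "\<dots> \<longleftrightarrow> real k - 1 < 2^n * \<rho> \<omega> / t \<and> 2^n * \<rho> \<omega> / t \<le> real k"
        by (simp add: ceiling_eq_iff)
      also have "\<dots> \<longleftrightarrow> (\<rho> \<omega> \<le> v \<and> \<not> \<rho> \<omega> \<le> t * (real k - 1) / 2^n)"
      proof -
        have p: "0 < (2::real)^n" by simp
        have a1: "2^n * \<rho> \<omega> / t \<le> real k \<longleftrightarrow> 2^n * \<rho> \<omega> \<le> real k * t" by (rule pos_divide_le_eq[OF t(1)])
        have a2: "\<rho> \<omega> \<le> t * real k / 2^n \<longleftrightarrow> \<rho> \<omega> * 2^n \<le> t * real k" by (rule pos_le_divide_eq[OF p])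
        have b1: "2^n * \<rho> \<omega> / t \<le> real k - 1 \<longleftrightarrow> 2^n * \<rho> \<omega> \<le> (real k - 1) * t" by (rule pos_divide_le_eq[OF t(1)])
        have b2: "\<rho> \<omega> \<le> t * (real k - 1) / 2^n \<longleftrightarrow> \<rho> \<omega> * 2^n \<le> t * (real k - 1)" by (rule pos_le_divide_eq[OF p])
        have c: "2^n * \<rho> \<omega> = \<rho> \<omega> * 2^n" "real k * t = t * real k" "(real k - 1) * t = t * (real k - 1)"
          by (simp_all only: mult.commute)
        show ?thesis unfolding k(2) using a1 a2 b1 b2 c by linarith
      qed
      finally show ?thesis .
    qed
    then show ?thesis by auto
  qed
  have "t * (real k - 1) / 2^n \<le> v" unfolding k(2) using t by (simp add: field_simps)
  then show ?thesis unfolding eq using st_le[OF st v0, of v] st_le[OF st v0, of "t * (real k - 1) / 2^n"]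
    by auto
qed

lemma dg_sum: fixes X :: "real \<Rightarrow> 'a \<Rightarrow> real" assumes t: "0 < t" and r: "0 \<le> \<rho> \<omega>" "\<rho> \<omega> \<le> t" and \<omega>: "\<omega> \<in> space M"
  shows "(\<Sum>v\<in>grid t n. indicator {\<omega>\<in>space M. dg t n \<rho> \<omega> = v} \<omega> * X v \<omega>) = X (dg t n \<rho> \<omega>) \<omega>"
proof -
  have "dg t n \<rho> \<omega> \<in> grid t n" by (rule dg_in_grid[of t \<rho> \<omega> n, OF t r])
  moreover have "\<And>v. indicator {\<omega>\<in>space M. dg t n \<rho> \<omega> = v} \<omega> * X v \<omega> = (if dg t n \<rho> \<omega> = v then X v \<omega> else 0)"
    using \<omega> by (simp add: indicator_def)
  ultimately show ?thesis using finite_grid[of t n] by (simp add: sum.delta)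
qed

lemma rc_dg: fixes X :: "real \<Rightarrow> 'a \<Rightarrow> real" assumes rc: "\<forall>s\<in>{0..<T}. ((\<lambda>u. X u \<omega>) \<longlongrightarrow> X s \<omega>) (at_right s)"
  and t: "0 < t" "t \<le> T" and r: "0 \<le> \<rho> \<omega>" "\<rho> \<omega> \<le> t"
  shows "(\<lambda>n. X (dg t n \<rho> \<omega>) \<omega>) \<longlonglongrightarrow> X (\<rho> \<omega>) \<omega>"
proof (cases "\<rho> \<omega> < T")
  case True
  have "((\<lambda>u. X u \<omega>) \<longlongrightarrow> X (\<rho> \<omega>) \<omega>) (at_right (\<rho> \<omega>))" using rc True r by auto
  from rc_seq[OF this dg_lim[OF t(1), of \<rho> \<omega>] dg_ge[OF t(1), of \<rho> \<omega>]] show ?thesis .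
next
  case False
  then have e: "\<rho> \<omega> = t" using r t by auto
  have "\<And>n. dg t n \<rho> \<omega> = t" by (rule dg_eq_t[of t \<rho> \<omega>, OF t(1) e])
  then show ?thesis using e by simp
qed

lemma progressive: fixes X :: "real \<Rightarrow> 'a \<Rightarrow> real"
  assumes ad: "\<forall>s\<in>{0..T}. X s \<in> borel_measurable (F s)"
    and rc: "\<forall>\<omega>\<in>space M. \<forall>s\<in>{0..<T}. ((\<lambda>u. X u \<omega>) \<longlongrightarrow> X s \<omega>) (at_right s)"
    and st: "stopping_time_on M F T \<rho>" and t: "t \<in> {0..T}"
  shows "(\<lambda>\<omega>. X (min t (\<rho> \<omega>)) \<omega>) \<in> borel_measurable (F t)"
proof (cases "t = 0")
  case True
  have X0: "X 0 \<in> borel_measurable (F t)" using ad T_pos True by auto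
  have eq: "\<And>\<omega>. \<omega> \<in> space (F t) \<Longrightarrow> X (min t (\<rho> \<omega>)) \<omega> = X 0 \<omega>"
  proof -
    fix \<omega> assume "\<omega> \<in> space (F t)"
    then have "\<omega> \<in> space M" using t by simp
    then have "0 \<le> \<rho> \<omega>" using st_range[OF st] by blast
    then show "X (min t (\<rho> \<omega>)) \<omega> = X 0 \<omega>" using True by simp
  qed
  have "(\<lambda>\<omega>. X (min t (\<rho> \<omega>)) \<omega>) \<in> borel_measurable (F t) \<longleftrightarrow> X 0 \<in> borel_measurable (F t)"
    by (rule measurable_cong) (rule eq)
  then show ?thesis using X0 by blast
next
  case False
  then have t0: "0 < t" using t by auto
  define \<sigma> where "\<sigma> = (\<lambda>\<omega>. min t (\<rho> \<omega>))"
  have st2: "stopping_time_on M F T \<sigma>" unfolding \<sigma>_def by (rule st_min_const[OF st t])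
  have le: "\<forall>\<omega>\<in>space M. \<sigma> \<omega> \<le> t" unfolding \<sigma>_def by simp
  define Z where "Z = (\<lambda>n \<omega>. (\<Sum>v\<in>grid t n. indicator {\<omega>\<in>space M. dg t n \<sigma> \<omega> = v} \<omega> * X v \<omega>))"
  have Zm: "Z n \<in> borel_measurable (F t)" for n
    unfolding Z_def
  proof (rule borel_measurable_sum)
    fix v assume v: "v \<in> grid t n"
    have v0: "0 \<le> v" "v \<le> t" using grid_range[of t v n] t0 v by auto
    have tT: "t \<le> T" using t by simp
    have "{\<omega>\<in>space M. dg t n \<sigma> \<omega> = v} \<in> sets (F v)" by (rule dg_set[OF st2 t0 tT le v])
    then have "{\<omega>\<in>space M. dg t n \<sigma> \<omega> = v} \<in> sets (F t)" using sets_mono[of v t] v0 tT by blast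
    then have i: "indicator {\<omega>\<in>space M. dg t n \<sigma> \<omega> = v} \<in> borel_measurable (F t)" by (rule borel_measurable_indicator)
    have "X v \<in> borel_measurable (F v)" using ad v0 tT by simp
    then have x: "X v \<in> borel_measurable (F t)" using v0 tT by (rule meas_mono[of _ v])
    show "(\<lambda>\<omega>. indicator {\<omega>\<in>space M. dg t n \<sigma> \<omega> = v} \<omega> * X v \<omega>) \<in> borel_measurable (F t)"
      using i x by (rule borel_measurable_times)
  qed
  have "(\<lambda>\<omega>. X (\<sigma> \<omega>) \<omega>) \<in> borel_measurable (F t)"
  proof (rule borel_measurable_LIMSEQ_real[OF _ Zm])
    fix \<omega> assume "\<omega> \<in> space (F t)"
    then have \<omega>: "\<omega> \<in> space M" using t by simp
    have r: "0 \<le> \<sigma> \<omega>" "\<sigma> \<omega> \<le> t" using st_range[OF st \<omega>] t0 unfolding \<sigma>_def by auto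
    have rc\<omega>: "\<forall>s\<in>{0..<T}. ((\<lambda>u. X u \<omega>) \<longlongrightarrow> X s \<omega>) (at_right s)" using rc \<omega> by blast
    have tT: "t \<le> T" using t by simp
    show "(\<lambda>n. Z n \<omega>) \<longlonglongrightarrow> X (\<sigma> \<omega>) \<omega>"
      unfolding Z_def dg_sum[of t \<sigma> \<omega>, OF t0 r \<omega>] by (rule rc_dg[where X=X and \<omega>=\<omega> and t=t and \<rho>=\<sigma>, OF rc\<omega> t0 tT r])
  qed
  then show ?thesis unfolding \<sigma>_def .
qed

end

context fsetting
begin

definition cproc :: "(real \<Rightarrow> 'a \<Rightarrow> real) \<Rightarrow> bool" where
  "cproc X \<longleftrightarrow> (\<forall>s\<in>{0..T}. X s \<in> borel_measurable (F s)) \<and>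
     (\<forall>\<omega>\<in>space M. \<forall>s\<in>{0..<T}. ((\<lambda>u. X u \<omega>) \<longlongrightarrow> X s \<omega>) (at_right s)) \<and>
     (\<forall>s\<in>{0..T}. integrable M (X s)) \<and>
     (\<forall>s\<in>{0..T}. AE \<omega> in M. cexp M F s (X T) \<omega> = X s \<omega>)"

lemma ii: "A \<in> sets M \<Longrightarrow> integrable M f \<Longrightarrow> integrable M (\<lambda>x. indicator A x * (f x::real))"
  using integrable_mult_indicator[of A M f] by simp

lemma T_in: "T \<in> {0..T}" using T_pos by simp

lemma cproc_meas: "cproc X \<Longrightarrow> s \<in> {0..T} \<Longrightarrow> X s \<in> borel_measurable M"
  unfolding cproc_def using meas_M by blast

lemma cproc_int: "cproc X \<Longrightarrow> s \<in> {0..T} \<Longrightarrow> integrable M (X s)"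
  unfolding cproc_def by blast

lemma core1: assumes X: "cproc X" and v: "v \<in> {0..T}" and A: "A \<in> sets (F v)"
  shows "(\<integral>\<omega>. indicator A \<omega> * X v \<omega> \<partial>M) = (\<integral>\<omega>. indicator A \<omega> * X T \<omega> \<partial>M)"
proof -
  have AM: "A \<in> sets M" using sets_F_M[OF v A] .
  have ae: "AE \<omega> in M. cexp M F v (X T) \<omega> = X v \<omega>" using X v unfolding cproc_def by blast
  have m1: "(\<lambda>\<omega>. indicator A \<omega> * X v \<omega>) \<in> borel_measurable M"
    using cproc_meas[OF X v] AM by measurable
  have "cexp M F v (X T) \<in> borel_measurable M" using meas_M[OF ce_meas[OF v] v] .
  then have m2: "(\<lambda>\<omega>. indicator A \<omega> * cexp M F v (X T) \<omega>) \<in> borel_measurable M"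
    using AM by measurable
  have "(\<integral>\<omega>. indicator A \<omega> * X v \<omega> \<partial>M) = (\<integral>\<omega>. indicator A \<omega> * cexp M F v (X T) \<omega> \<partial>M)"
    using m1 m2 ae by (intro integral_cong_AE) auto
  also have "\<dots> = (\<integral>\<omega>. indicator A \<omega> * X T \<omega> \<partial>M)"
    by (rule ce_intA[OF v cproc_int[OF X T_in] A])
  finally show ?thesis .
qed

lemma core2: assumes X: "cproc X" and v: "v \<in> {0..T}" and A: "A \<in> sets (F v)"
  shows "(\<integral>\<omega>. indicator A \<omega> * \<bar>X v \<omega>\<bar> \<partial>M) \<le> (\<integral>\<omega>. indicator A \<omega> * \<bar>X T \<omega>\<bar> \<partial>M)"
proof -
  have AM: "A \<in> sets M" using sets_F_M[OF v A] .
  have iT: "integrable M (X T)" by (rule cproc_int[OF X T_in])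
  have iaT: "integrable M (\<lambda>\<omega>. \<bar>X T \<omega>\<bar>)" using iT by simp
  have imT: "integrable M (\<lambda>\<omega>. -1 * X T \<omega>)" using iT by simp
  have ae: "AE \<omega> in M. cexp M F v (X T) \<omega> = X v \<omega>" using X v unfolding cproc_def by blast
  have a1: "AE \<omega> in M. cexp M F v (X T) \<omega> \<le> cexp M F v (\<lambda>\<omega>. \<bar>X T \<omega>\<bar>) \<omega>"
    by (rule ce_mono[OF v _ iT iaT]) simp
  have a2: "AE \<omega> in M. cexp M F v (\<lambda>\<omega>. -1 * X T \<omega>) \<omega> \<le> cexp M F v (\<lambda>\<omega>. \<bar>X T \<omega>\<bar>) \<omega>"
    by (rule ce_mono[OF v _ imT iaT]) simp
  have a3: "AE \<omega> in M. cexp M F v (\<lambda>\<omega>. -1 * X T \<omega>) \<omega> = -1 * cexp M F v (X T) \<omega>"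
    by (rule ce_cmult[OF v iT])
  have le: "AE \<omega> in M. indicator A \<omega> * \<bar>X v \<omega>\<bar> \<le> indicator A \<omega> * cexp M F v (\<lambda>\<omega>. \<bar>X T \<omega>\<bar>) \<omega>"
    using ae a1 a2 a3 by eventually_elim (auto simp: indicator_def)
  have i1: "integrable M (\<lambda>\<omega>. indicator A \<omega> * \<bar>X v \<omega>\<bar>)"
    using ii[OF AM integrable_abs[OF cproc_int[OF X v]]] .
  have i2: "integrable M (\<lambda>\<omega>. indicator A \<omega> * cexp M F v (\<lambda>\<omega>. \<bar>X T \<omega>\<bar>) \<omega>)"
    using ii[OF AM ce_int[OF v iaT]] .
  have "(\<integral>\<omega>. indicator A \<omega> * \<bar>X v \<omega>\<bar> \<partial>M) \<le> (\<integral>\<omega>. indicator A \<omega> * cexp M F v (\<lambda>\<omega>. \<bar>X T \<omega>\<bar>) \<omega> \<partial>M)"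
    by (rule integral_mono_AE[OF i1 i2 le])
  also have "\<dots> = (\<integral>\<omega>. indicator A \<omega> * \<bar>X T \<omega>\<bar> \<partial>M)"
    by (rule ce_intA[OF v iaT A])
  finally show ?thesis .
qed

lemma grid_sum_int: assumes X: "cproc X" and B: "\<forall>v\<in>grid T n. B v \<in> sets (F v)"
  shows "(\<integral>\<omega>. (\<Sum>v\<in>grid T n. indicator (B v) \<omega> * X v \<omega>) \<partial>M) = (\<integral>\<omega>. (\<Sum>v\<in>grid T n. indicator (B v) \<omega> * X T \<omega>) \<partial>M)"
    and "(\<integral>\<omega>. (\<Sum>v\<in>grid T n. indicator (B v) \<omega> * \<bar>X v \<omega>\<bar>) \<partial>M) \<le> (\<integral>\<omega>. (\<Sum>v\<in>grid T n. indicator (B v) \<omega> * \<bar>X T \<omega>\<bar>) \<partial>M)"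
proof -
  have vr: "v \<in> {0..T}" if "v \<in> grid T n" for v using grid_range[of T v n] that T_pos by auto
  have BM: "B v \<in> sets M" if "v \<in> grid T n" for v using sets_F_M[OF vr[OF that]] B that by blast
  have i1: "integrable M (\<lambda>\<omega>. indicator (B v) \<omega> * X v \<omega>)" if "v \<in> grid T n" for v
    using ii[OF BM[OF that] cproc_int[OF X vr[OF that]]] .
  have i2: "integrable M (\<lambda>\<omega>. indicator (B v) \<omega> * X T \<omega>)" if "v \<in> grid T n" for v
    using ii[OF BM[OF that] cproc_int[OF X T_in]] .
  have i3: "integrable M (\<lambda>\<omega>. indicator (B v) \<omega> * \<bar>X v \<omega>\<bar>)" if "v \<in> grid T n" for v
    using ii[OF BM[OF that] integrable_abs[OF cproc_int[OF X vr[OF that]]]] .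
  have i4: "integrable M (\<lambda>\<omega>. indicator (B v) \<omega> * \<bar>X T \<omega>\<bar>)" if "v \<in> grid T n" for v
    using ii[OF BM[OF that] integrable_abs[OF cproc_int[OF X T_in]]] .
  have "(\<integral>\<omega>. (\<Sum>v\<in>grid T n. indicator (B v) \<omega> * X v \<omega>) \<partial>M) = (\<Sum>v\<in>grid T n. (\<integral>\<omega>. indicator (B v) \<omega> * X v \<omega> \<partial>M))"
    by (rule Bochner_Integration.integral_sum) (rule i1)
  also have "\<dots> = (\<Sum>v\<in>grid T n. (\<integral>\<omega>. indicator (B v) \<omega> * X T \<omega> \<partial>M))"
    by (rule sum.cong[OF refl]) (rule core1[OF X vr], assumption, use B in blast)
  also have "\<dots> = (\<integral>\<omega>. (\<Sum>v\<in>grid T n. indicator (B v) \<omega> * X T \<omega>) \<partial>M)"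
    by (rule Bochner_Integration.integral_sum[symmetric]) (rule i2)
  finally show "(\<integral>\<omega>. (\<Sum>v\<in>grid T n. indicator (B v) \<omega> * X v \<omega>) \<partial>M) = (\<integral>\<omega>. (\<Sum>v\<in>grid T n. indicator (B v) \<omega> * X T \<omega>) \<partial>M)" .
  have "(\<integral>\<omega>. (\<Sum>v\<in>grid T n. indicator (B v) \<omega> * \<bar>X v \<omega>\<bar>) \<partial>M) = (\<Sum>v\<in>grid T n. (\<integral>\<omega>. indicator (B v) \<omega> * \<bar>X v \<omega>\<bar> \<partial>M))"
    by (rule Bochner_Integration.integral_sum) (rule i3)
  also have "\<dots> \<le> (\<Sum>v\<in>grid T n. (\<integral>\<omega>. indicator (B v) \<omega> * \<bar>X T \<omega>\<bar> \<partial>M))"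
    by (rule sum_mono) (rule core2[OF X vr], assumption, use B in blast)
  also have "\<dots> = (\<integral>\<omega>. (\<Sum>v\<in>grid T n. indicator (B v) \<omega> * \<bar>X T \<omega>\<bar>) \<partial>M)"
    by (rule Bochner_Integration.integral_sum[symmetric]) (rule i4)
  finally show "(\<integral>\<omega>. (\<Sum>v\<in>grid T n. indicator (B v) \<omega> * \<bar>X v \<omega>\<bar>) \<partial>M) \<le> (\<integral>\<omega>. (\<Sum>v\<in>grid T n. indicator (B v) \<omega> * \<bar>X T \<omega>\<bar>) \<partial>M)" .
qed

end

context fsetting
begin

lemma disc:
  assumes X: "cproc X" and st: "stopping_time_on M F T \<rho>"
  shows "integrable M (\<lambda>\<omega>. X (dg T n \<rho> \<omega>) \<omega>)"
    and "(\<integral>\<omega>. X (dg T n \<rho> \<omega>) \<omega> \<partial>M) = (\<integral>\<omega>. X T \<omega> \<partial>M)"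
    and "(\<integral>\<omega>. (if K \<le> \<bar>X (dg T n \<rho> \<omega>) \<omega>\<bar> then \<bar>X (dg T n \<rho> \<omega>) \<omega>\<bar> else 0) \<partial>M)
         \<le> (\<integral>\<omega>. (if K \<le> \<bar>X (dg T n \<rho> \<omega>) \<omega>\<bar> then \<bar>X T \<omega>\<bar> else 0) \<partial>M)"
proof -
  define G where "G = grid T n"
  define Bd where "Bd = (\<lambda>v. {\<omega>\<in>space M. dg T n \<rho> \<omega> = v})"
  have le: "\<forall>\<omega>\<in>space M. \<rho> \<omega> \<le> T" using st_range[OF st] by blast
  have vr: "v \<in> {0..T}" if "v \<in> G" for v using grid_range[of T v n] that T_pos unfolding G_def by auto
  have hB: "\<forall>v\<in>G. Bd v \<in> sets (F v)" unfolding Bd_def G_def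
    using dg_set[OF st T_pos order_refl le] by blast
  have r: "0 \<le> \<rho> \<omega>" "\<rho> \<omega> \<le> T" if "\<omega> \<in> space M" for \<omega> using st_range[OF st that] by auto
  have eqZ: "X (dg T n \<rho> \<omega>) \<omega> = (\<Sum>v\<in>G. indicator (Bd v) \<omega> * X v \<omega>)" if "\<omega> \<in> space M" for \<omega>
    unfolding G_def Bd_def using dg_sum[where X=X and t=T and \<rho>=\<rho> and \<omega>=\<omega> and n=n, OF T_pos r[OF that] that] by simp
  have eqT: "X T \<omega> = (\<Sum>v\<in>G. indicator (Bd v) \<omega> * X T \<omega>)" if "\<omega> \<in> space M" for \<omega>
    unfolding G_def Bd_def using dg_sum[where X="\<lambda>_. X T" and t=T and \<rho>=\<rho> and \<omega>=\<omega> and n=n, OF T_pos r[OF that] that] by simp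
  have BM: "Bd v \<in> sets M" if "v \<in> G" for v using sets_F_M[OF vr[OF that]] hB that by blast
  have isum: "integrable M (\<lambda>\<omega>. \<Sum>v\<in>G. indicator (Bd v) \<omega> * X v \<omega>)"
    by (rule Bochner_Integration.integrable_sum) (rule ii[OF BM cproc_int[OF X vr]], assumption+)
  have "integrable M (\<lambda>\<omega>. X (dg T n \<rho> \<omega>) \<omega>) \<longleftrightarrow> integrable M (\<lambda>\<omega>. \<Sum>v\<in>G. indicator (Bd v) \<omega> * X v \<omega>)"
    by (rule Bochner_Integration.integrable_cong[OF refl]) (rule eqZ)
  then show "integrable M (\<lambda>\<omega>. X (dg T n \<rho> \<omega>) \<omega>)" using isum by blast
  have "(\<integral>\<omega>. X (dg T n \<rho> \<omega>) \<omega> \<partial>M) = (\<integral>\<omega>. (\<Sum>v\<in>G. indicator (Bd v) \<omega> * X v \<omega>) \<partial>M)"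
    by (rule Bochner_Integration.integral_cong[OF refl]) (rule eqZ)
  also have "\<dots> = (\<integral>\<omega>. (\<Sum>v\<in>G. indicator (Bd v) \<omega> * X T \<omega>) \<partial>M)"
    unfolding G_def by (rule grid_sum_int(1)[OF X]) (use hB in \<open>simp add: G_def\<close>)
  also have "\<dots> = (\<integral>\<omega>. X T \<omega> \<partial>M)"
    by (rule Bochner_Integration.integral_cong[OF refl]) (rule eqT[symmetric])
  finally show "(\<integral>\<omega>. X (dg T n \<rho> \<omega>) \<omega> \<partial>M) = (\<integral>\<omega>. X T \<omega> \<partial>M)" .
  define BK where "BK = (\<lambda>v. Bd v \<inter> {\<omega>\<in>space M. K \<le> \<bar>X v \<omega>\<bar>})"
  have hBK: "\<forall>v\<in>G. BK v \<in> sets (F v)"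
  proof
    fix v assume v: "v \<in> G"
    have "X v \<in> borel_measurable (F v)" using X vr[OF v] unfolding cproc_def by blast
    then have "{\<omega>\<in>space (F v). K \<le> \<bar>X v \<omega>\<bar>} \<in> sets (F v)" by measurable
    then have "{\<omega>\<in>space M. K \<le> \<bar>X v \<omega>\<bar>} \<in> sets (F v)" using vr[OF v] by simp
    then show "BK v \<in> sets (F v)" unfolding BK_def using hB v by blast
  qed
  have pw1: "(if K \<le> \<bar>X (dg T n \<rho> \<omega>) \<omega>\<bar> then \<bar>X (dg T n \<rho> \<omega>) \<omega>\<bar> else 0) = (\<Sum>v\<in>G. indicator (BK v) \<omega> * \<bar>X v \<omega>\<bar>)"
     and pw2: "(if K \<le> \<bar>X (dg T n \<rho> \<omega>) \<omega>\<bar> then \<bar>X T \<omega>\<bar> else 0) = (\<Sum>v\<in>G. indicator (BK v) \<omega> * \<bar>X T \<omega>\<bar>)"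
    if \<omega>: "\<omega> \<in> space M" for \<omega>
  proof -
    define d where "d = dg T n \<rho> \<omega>"
    have dG: "d \<in> G" unfolding d_def G_def by (rule dg_in_grid[of T \<rho> \<omega> n, OF T_pos r[OF \<omega>]])
    have i1: "indicator (BK v) \<omega> * \<bar>X v \<omega>\<bar> = (if v = d then (if K \<le> \<bar>X v \<omega>\<bar> then \<bar>X v \<omega>\<bar> else 0) else 0)" for v
      unfolding BK_def Bd_def d_def using \<omega> by (auto simp: indicator_def)
    have i2: "indicator (BK v) \<omega> * \<bar>X T \<omega>\<bar> = (if v = d then (if K \<le> \<bar>X v \<omega>\<bar> then \<bar>X T \<omega>\<bar> else 0) else 0)" for v
      unfolding BK_def Bd_def d_def using \<omega> by (auto simp: indicator_def)
    have fG: "finite G" unfolding G_def by (rule finite_grid)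
    show "(if K \<le> \<bar>X (dg T n \<rho> \<omega>) \<omega>\<bar> then \<bar>X (dg T n \<rho> \<omega>) \<omega>\<bar> else 0) = (\<Sum>v\<in>G. indicator (BK v) \<omega> * \<bar>X v \<omega>\<bar>)"
      unfolding i1 sum.delta[OF fG] using dG by (simp add: d_def)
    show "(if K \<le> \<bar>X (dg T n \<rho> \<omega>) \<omega>\<bar> then \<bar>X T \<omega>\<bar> else 0) = (\<Sum>v\<in>G. indicator (BK v) \<omega> * \<bar>X T \<omega>\<bar>)"
      unfolding i2 sum.delta[OF fG] using dG by (simp add: d_def)
  qed
  have "(\<integral>\<omega>. (if K \<le> \<bar>X (dg T n \<rho> \<omega>) \<omega>\<bar> then \<bar>X (dg T n \<rho> \<omega>) \<omega>\<bar> else 0) \<partial>M)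
      = (\<integral>\<omega>. (\<Sum>v\<in>G. indicator (BK v) \<omega> * \<bar>X v \<omega>\<bar>) \<partial>M)"
    by (rule Bochner_Integration.integral_cong[OF refl]) (rule pw1)
  also have "\<dots> \<le> (\<integral>\<omega>. (\<Sum>v\<in>G. indicator (BK v) \<omega> * \<bar>X T \<omega>\<bar>) \<partial>M)"
    unfolding G_def by (rule grid_sum_int(2)[OF X]) (use hBK in \<open>simp add: G_def\<close>)
  also have "\<dots> = (\<integral>\<omega>. (if K \<le> \<bar>X (dg T n \<rho> \<omega>) \<omega>\<bar> then \<bar>X T \<omega>\<bar> else 0) \<partial>M)"
    by (rule Bochner_Integration.integral_cong[OF refl]) (rule pw2[symmetric])
  finally show "(\<integral>\<omega>. (if K \<le> \<bar>X (dg T n \<rho> \<omega>) \<omega>\<bar> then \<bar>X (dg T n \<rho> \<omega>) \<omega>\<bar> else 0) \<partial>M)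
         \<le> (\<integral>\<omega>. (if K \<le> \<bar>X (dg T n \<rho> \<omega>) \<omega>\<bar> then \<bar>X T \<omega>\<bar> else 0) \<partial>M)" .
qed

end

definition tr :: "real \<Rightarrow> real \<Rightarrow> real" where "tr K x = max (-K) (min K x)"

lemma tr_bound: "0 < K \<Longrightarrow> \<bar>x - tr K x\<bar> \<le> (if K \<le> \<bar>x\<bar> then \<bar>x\<bar> else 0)"
  unfolding tr_def by auto

lemma tr_abs: "0 < K \<Longrightarrow> \<bar>tr K x\<bar> \<le> K"
  unfolding tr_def by auto

lemma tr_cont: "(f \<longlongrightarrow> l) F \<Longrightarrow> ((\<lambda>n. tr K (f n)) \<longlongrightarrow> tr K l) F"
  unfolding tr_def by (intro tendsto_max tendsto_min tendsto_const)

lemma tail_lim: fixes f :: "'a \<Rightarrow> real"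
  assumes "integrable M f"
  shows "(\<lambda>m. \<integral>\<omega>. (if real m \<le> \<bar>f \<omega>\<bar> then \<bar>f \<omega>\<bar> else 0) \<partial>M) \<longlonglongrightarrow> 0"
proof -
  have [measurable]: "f \<in> borel_measurable M" using assms by simp
  have "(\<lambda>m. \<integral>\<omega>. (if real m \<le> \<bar>f \<omega>\<bar> then \<bar>f \<omega>\<bar> else 0) \<partial>M) \<longlonglongrightarrow> (\<integral>\<omega>. 0 \<partial>M)"
  proof (rule integral_dominated_convergence[where w="\<lambda>\<omega>. \<bar>f \<omega>\<bar>"])
    show "integrable M (\<lambda>\<omega>. \<bar>f \<omega>\<bar>)" using assms by simp
    show "AE x in M. (\<lambda>m. if real m \<le> \<bar>f x\<bar> then \<bar>f x\<bar> else 0) \<longlonglongrightarrow> 0"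
    proof (rule AE_I2)
      fix x
      obtain N :: nat where N: "\<bar>f x\<bar> + 1 \<le> real N" using real_arch_simple by blast
      have "eventually (\<lambda>m. (if real m \<le> \<bar>f x\<bar> then \<bar>f x\<bar> else 0) = 0) sequentially"
        unfolding eventually_sequentially
      proof (intro exI allI impI)
        fix m assume "N \<le> m"
        then have "real N \<le> real m" by simp
        then show "(if real m \<le> \<bar>f x\<bar> then \<bar>f x\<bar> else 0) = 0" using N by simp
      qed
      then show "(\<lambda>m. if real m \<le> \<bar>f x\<bar> then \<bar>f x\<bar> else 0) \<longlonglongrightarrow> 0" by (rule tendsto_eventually)
    qed
    show "\<And>m. AE x in M. norm (if real m \<le> \<bar>f x\<bar> then \<bar>f x\<bar> else 0) \<le> \<bar>f x\<bar>" by simp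
  qed simp_all
  then show ?thesis by simp
qed

context fsetting
begin

lemma OS0:
  assumes X: "cproc X" and st: "stopping_time_on M F T \<rho>" and iY: "integrable M (\<lambda>\<omega>. X (\<rho> \<omega>) \<omega>)"
  shows "(\<integral>\<omega>. X (\<rho> \<omega>) \<omega> \<partial>M) = (\<integral>\<omega>. X T \<omega> \<partial>M)"
proof (rule ccontr)
  define \<xi> where "\<xi> = X T"
  define Y where "Y = (\<lambda>\<omega>. X (\<rho> \<omega>) \<omega>)"
  define Z where "Z = (\<lambda>n \<omega>. X (dg T n \<rho> \<omega>) \<omega>)"
  define c where "c = (\<integral>\<omega>. \<bar>\<xi> \<omega>\<bar> \<partial>M)"
  define e where "e = (\<lambda>L. \<integral>\<omega>. (if L \<le> \<bar>\<xi> \<omega>\<bar> then \<bar>\<xi> \<omega>\<bar> else 0) \<partial>M)"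
  define e' where "e' = (\<lambda>K. \<integral>\<omega>. (if K \<le> \<bar>Y \<omega>\<bar> then \<bar>Y \<omega>\<bar> else 0) \<partial>M)"
  have i\<xi>: "integrable M \<xi>" unfolding \<xi>_def by (rule cproc_int[OF X T_in])
  have iY': "integrable M Y" unfolding Y_def by (rule iY)
  have iZ: "integrable M (Z n)" for n unfolding Z_def by (rule disc(1)[OF X st])
  have [measurable]: "\<xi> \<in> borel_measurable M" "Y \<in> borel_measurable M" "Z n \<in> borel_measurable M" for n
    using i\<xi> iY' iZ by auto
  have intZ: "(\<integral>\<omega>. Z n \<omega> \<partial>M) = (\<integral>\<omega>. \<xi> \<omega> \<partial>M)" for n unfolding Z_def \<xi>_def by (rule disc(2)[OF X st])
  have lim: "(\<lambda>n. Z n \<omega>) \<longlonglongrightarrow> Y \<omega>" if \<omega>: "\<omega> \<in> space M" for \<omega>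
  proof -
    have rc\<omega>: "\<forall>s\<in>{0..<T}. ((\<lambda>u. X u \<omega>) \<longlongrightarrow> X s \<omega>) (at_right s)" using X \<omega> unfolding cproc_def by blast
    have r: "0 \<le> \<rho> \<omega>" "\<rho> \<omega> \<le> T" using st_range[OF st \<omega>] by auto
    show ?thesis unfolding Z_def Y_def
      by (rule rc_dg[where X=X and \<omega>=\<omega> and t=T and \<rho>=\<rho>, OF rc\<omega> T_pos order_refl r])
  qed
  have absZ: "(\<integral>\<omega>. \<bar>Z n \<omega>\<bar> \<partial>M) \<le> c" for n
  proof -
    have "(\<integral>\<omega>. (if 0 \<le> \<bar>Z n \<omega>\<bar> then \<bar>Z n \<omega>\<bar> else 0) \<partial>M) \<le> (\<integral>\<omega>. (if 0 \<le> \<bar>Z n \<omega>\<bar> then \<bar>\<xi> \<omega>\<bar> else 0) \<partial>M)"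
      unfolding Z_def \<xi>_def by (rule disc(3)[OF X st])
    then show ?thesis unfolding c_def by simp
  qed
  have S2: "(\<integral>\<omega>. (if K \<le> \<bar>Z n \<omega>\<bar> then \<bar>Z n \<omega>\<bar> else 0) \<partial>M) \<le> e L + L * c / K"
    if K: "0 < K" and L: "0 \<le> L" for n K L
  proof -
    have "(\<integral>\<omega>. (if K \<le> \<bar>Z n \<omega>\<bar> then \<bar>Z n \<omega>\<bar> else 0) \<partial>M) \<le> (\<integral>\<omega>. (if K \<le> \<bar>Z n \<omega>\<bar> then \<bar>\<xi> \<omega>\<bar> else 0) \<partial>M)"
      unfolding Z_def \<xi>_def by (rule disc(3)[OF X st])
    also have "\<dots> \<le> (\<integral>\<omega>. (if L \<le> \<bar>\<xi> \<omega>\<bar> then \<bar>\<xi> \<omega>\<bar> else 0) + (L / K) * \<bar>Z n \<omega>\<bar> \<partial>M)"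
    proof (rule Bochner_Integration.integral_mono)
      show "integrable M (\<lambda>\<omega>. if K \<le> \<bar>Z n \<omega>\<bar> then \<bar>\<xi> \<omega>\<bar> else 0)"
        by (rule Bochner_Integration.integrable_bound[where f=\<xi>]) (auto simp: i\<xi>)
      have "integrable M (\<lambda>\<omega>. if L \<le> \<bar>\<xi> \<omega>\<bar> then \<bar>\<xi> \<omega>\<bar> else 0)"
        by (rule Bochner_Integration.integrable_bound[where f=\<xi>]) (auto simp: i\<xi>)
      then show "integrable M (\<lambda>\<omega>. (if L \<le> \<bar>\<xi> \<omega>\<bar> then \<bar>\<xi> \<omega>\<bar> else 0) + (L / K) * \<bar>Z n \<omega>\<bar>)"
        using iZ[of n] by simp
      fix \<omega> assume "\<omega> \<in> space M"
      show "(if K \<le> \<bar>Z n \<omega>\<bar> then \<bar>\<xi> \<omega>\<bar> else 0) \<le> (if L \<le> \<bar>\<xi> \<omega>\<bar> then \<bar>\<xi> \<omega>\<bar> else 0) + (L / K) * \<bar>Z n \<omega>\<bar>"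
      proof (cases "K \<le> \<bar>Z n \<omega>\<bar>")
        case True
        have "1 \<le> \<bar>Z n \<omega>\<bar> / K" using True K by simp
        then have "L \<le> L * (\<bar>Z n \<omega>\<bar> / K)" using L by (metis mult.right_neutral mult_left_mono)
        then have "L \<le> (L / K) * \<bar>Z n \<omega>\<bar>" by simp
        moreover have "0 \<le> (L / K) * \<bar>Z n \<omega>\<bar>" using K L by simp
        ultimately show ?thesis using True by auto
      next
        case False
        have "0 \<le> (L / K) * \<bar>Z n \<omega>\<bar>" using K L by simp
        then show ?thesis using False by auto
      qed
    qed
    also have "\<dots> = e L + (L / K) * (\<integral>\<omega>. \<bar>Z n \<omega>\<bar> \<partial>M)"
    proof -
      have "integrable M (\<lambda>\<omega>. if L \<le> \<bar>\<xi> \<omega>\<bar> then \<bar>\<xi> \<omega>\<bar> else 0)"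
        by (rule Bochner_Integration.integrable_bound[where f=\<xi>]) (auto simp: i\<xi>)
      then show ?thesis unfolding e_def using iZ[of n] by simp
    qed
    also have "\<dots> \<le> e L + (L / K) * c"
      using absZ[of n] K L by (intro add_left_mono mult_left_mono) auto
    finally show ?thesis by simp
  qed
  have itr: "integrable M (\<lambda>\<omega>. tr K (f \<omega>))" if "0 < K" "f \<in> borel_measurable M" for K f
  proof (rule integrable_const_bound[where B=K])
    show "AE x in M. norm (tr K (f x)) \<le> K" using tr_abs[OF that(1)] by simp
    show "(\<lambda>\<omega>. tr K (f \<omega>)) \<in> borel_measurable M" using that(2) unfolding tr_def by measurable
  qed
  have S5: "\<bar>(\<integral>\<omega>. W \<omega> \<partial>M) - (\<integral>\<omega>. tr K (W \<omega>) \<partial>M)\<bar> \<le> (\<integral>\<omega>. (if K \<le> \<bar>W \<omega>\<bar> then \<bar>W \<omega>\<bar> else 0) \<partial>M)"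
    if K: "0 < K" and W: "integrable M W" for K W
  proof -
    have Wm[measurable]: "W \<in> borel_measurable M" using W by simp
    have "(\<integral>\<omega>. W \<omega> \<partial>M) - (\<integral>\<omega>. tr K (W \<omega>) \<partial>M) = (\<integral>\<omega>. W \<omega> - tr K (W \<omega>) \<partial>M)"
      using W itr[OF K Wm] by simp
    also have "\<bar>\<dots>\<bar> \<le> (\<integral>\<omega>. \<bar>W \<omega> - tr K (W \<omega>)\<bar> \<partial>M)"
      using integral_norm_bound[of M "\<lambda>\<omega>. W \<omega> - tr K (W \<omega>)"] by simp
    also have "\<dots> \<le> (\<integral>\<omega>. (if K \<le> \<bar>W \<omega>\<bar> then \<bar>W \<omega>\<bar> else 0) \<partial>M)"
    proof (rule Bochner_Integration.integral_mono)
      show "integrable M (\<lambda>\<omega>. \<bar>W \<omega> - tr K (W \<omega>)\<bar>)" using W itr[OF K Wm] by simp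
      show "integrable M (\<lambda>\<omega>. if K \<le> \<bar>W \<omega>\<bar> then \<bar>W \<omega>\<bar> else 0)"
        by (rule Bochner_Integration.integrable_bound[where f=W]) (auto simp: W)
      show "\<And>\<omega>. \<omega> \<in> space M \<Longrightarrow> \<bar>W \<omega> - tr K (W \<omega>)\<bar> \<le> (if K \<le> \<bar>W \<omega>\<bar> then \<bar>W \<omega>\<bar> else 0)"
        using tr_bound[OF K] by blast
    qed
    finally show ?thesis .
  qed
  have S4: "\<bar>(\<integral>\<omega>. \<xi> \<omega> \<partial>M) - (\<integral>\<omega>. tr K (Y \<omega>) \<partial>M)\<bar> \<le> e L + L * c / K"
    if K: "0 < K" and L: "0 \<le> L" for K L
  proof -
    have conv: "(\<lambda>n. \<integral>\<omega>. tr K (Z n \<omega>) \<partial>M) \<longlonglongrightarrow> (\<integral>\<omega>. tr K (Y \<omega>) \<partial>M)"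
    proof (rule integral_dominated_convergence[where w="\<lambda>_. K"])
      show "(\<lambda>\<omega>. tr K (Y \<omega>)) \<in> borel_measurable M" unfolding tr_def by measurable
      show "\<And>n. (\<lambda>\<omega>. tr K (Z n \<omega>)) \<in> borel_measurable M" unfolding tr_def by measurable
      show "integrable M (\<lambda>_. K)" by simp
      show "AE x in M. (\<lambda>n. tr K (Z n x)) \<longlonglongrightarrow> tr K (Y x)"
        by (rule AE_I2) (rule tr_cont[OF lim])
      show "\<And>n. AE x in M. norm (tr K (Z n x)) \<le> K" using tr_abs[OF K] by simp
    qed
    have "(\<lambda>n. \<bar>(\<integral>\<omega>. \<xi> \<omega> \<partial>M) - (\<integral>\<omega>. tr K (Z n \<omega>) \<partial>M)\<bar>) \<longlonglongrightarrow> \<bar>(\<integral>\<omega>. \<xi> \<omega> \<partial>M) - (\<integral>\<omega>. tr K (Y \<omega>) \<partial>M)\<bar>"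
      by (intro tendsto_rabs tendsto_diff tendsto_const conv)
    moreover have "\<bar>(\<integral>\<omega>. \<xi> \<omega> \<partial>M) - (\<integral>\<omega>. tr K (Z n \<omega>) \<partial>M)\<bar> \<le> e L + L * c / K" for n
    proof -
      have "\<bar>(\<integral>\<omega>. \<xi> \<omega> \<partial>M) - (\<integral>\<omega>. tr K (Z n \<omega>) \<partial>M)\<bar> = \<bar>(\<integral>\<omega>. Z n \<omega> \<partial>M) - (\<integral>\<omega>. tr K (Z n \<omega>) \<partial>M)\<bar>"
        using intZ[of n] by simp
      also have "\<dots> \<le> (\<integral>\<omega>. (if K \<le> \<bar>Z n \<omega>\<bar> then \<bar>Z n \<omega>\<bar> else 0) \<partial>M)" by (rule S5[OF K iZ])
      also have "\<dots> \<le> e L + L * c / K" by (rule S2[OF K L])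
      finally show ?thesis .
    qed
    ultimately show ?thesis by (intro LIMSEQ_le_const2) auto
  qed
  have main: "\<bar>(\<integral>\<omega>. \<xi> \<omega> \<partial>M) - (\<integral>\<omega>. Y \<omega> \<partial>M)\<bar> \<le> e L + L * c / K + e' K"
    if K: "0 < K" and L: "0 \<le> L" for K L
  proof -
    have "\<bar>(\<integral>\<omega>. Y \<omega> \<partial>M) - (\<integral>\<omega>. tr K (Y \<omega>) \<partial>M)\<bar> \<le> e' K" unfolding e'_def by (rule S5[OF K iY'])
    then show ?thesis using S4[OF K L] by linarith
  qed
  assume ne: "(\<integral>\<omega>. X (\<rho> \<omega>) \<omega> \<partial>M) \<noteq> (\<integral>\<omega>. X T \<omega> \<partial>M)"
  define d where "d = \<bar>(\<integral>\<omega>. \<xi> \<omega> \<partial>M) - (\<integral>\<omega>. Y \<omega> \<partial>M)\<bar>"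
  have d: "0 < d" using ne unfolding d_def \<xi>_def Y_def by simp
  have "(\<lambda>m. e (real m)) \<longlonglongrightarrow> 0" unfolding e_def by (rule tail_lim[OF i\<xi>])
  then have "eventually (\<lambda>m. e (real m) < d / 3) sequentially" using d by (intro order_tendstoD(2)) auto
  then obtain N where N: "e (real N) < d / 3" by (auto simp: eventually_sequentially)
  define L where "L = real N"
  have L: "0 \<le> L" unfolding L_def by simp
  have t1: "(\<lambda>m. e' (real m)) \<longlonglongrightarrow> 0" unfolding e'_def by (rule tail_lim[OF iY'])
  have t2: "(\<lambda>m. (L * c) / real m) \<longlonglongrightarrow> 0" by (rule lim_const_over_n)
  have ev1: "eventually (\<lambda>m. e' (real m) < d / 3) sequentially" using d by (intro order_tendstoD(2)[OF t1]) auto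
  have ev2: "eventually (\<lambda>m. (L * c) / real m < d / 3) sequentially" using d by (intro order_tendstoD(2)[OF t2]) auto
  have ev3: "eventually (\<lambda>m. 1 \<le> m) sequentially" by (rule eventually_ge_at_top)
  have "eventually (\<lambda>m. e' (real m) < d / 3 \<and> (L * c) / real m < d / 3 \<and> 1 \<le> m) sequentially"
    using eventually_conj[OF ev1 eventually_conj[OF ev2 ev3]] .
  then obtain m where m: "e' (real m) < d / 3" "(L * c) / real m < d / 3" "1 \<le> m"
    by (auto simp: eventually_sequentially)
  have K: "0 < real m" using m(3) by simp
  have "d \<le> e L + L * c / real m + e' (real m)" unfolding d_def by (rule main[OF K L])
  then show False using N m unfolding L_def by linarith
qed

end

context fsetting
begin

lemma OS:
  assumes X: "cproc X" and st: "stopping_time_on M F T \<rho>"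
    and iS: "\<forall>\<sigma>. stopping_time_on M F T \<sigma> \<longrightarrow> integrable M (\<lambda>\<omega>. X (\<sigma> \<omega>) \<omega>)"
    and t: "t \<in> {0..T}"
  shows "AE \<omega> in M. cexp M F t (\<lambda>\<omega>. X (\<rho> \<omega>) \<omega>) \<omega> = X (min t (\<rho> \<omega>)) \<omega>"
proof (rule ce_charact[OF t])
  show iY: "integrable M (\<lambda>\<omega>. X (\<rho> \<omega>) \<omega>)" using iS st by blast
  show iYt: "integrable M (\<lambda>\<omega>. X (min t (\<rho> \<omega>)) \<omega>)" using iS st_min_const[OF st t] by blast
  have ad: "\<forall>s\<in>{0..T}. X s \<in> borel_measurable (F s)" and rc: "\<forall>\<omega>\<in>space M. \<forall>s\<in>{0..<T}. ((\<lambda>u. X u \<omega>) \<longlongrightarrow> X s \<omega>) (at_right s)"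
    using X unfolding cproc_def by blast+
  show "(\<lambda>\<omega>. X (min t (\<rho> \<omega>)) \<omega>) \<in> borel_measurable (F t)" by (rule progressive[OF ad rc st t])
  fix A assume A: "A \<in> sets (F t)"
  have AM: "A \<in> sets M" by (rule sets_F_M[OF t A])
  have Asp: "A \<subseteq> space M" using sets.sets_into_space[OF AM] .
  define R where "R = {\<omega>\<in>space M. \<rho> \<omega> \<le> t}"
  have R: "R \<in> sets (F t)" unfolding R_def by (rule st_le[OF st t order_refl])
  define A1 where "A1 = A \<inter> R"
  define A2 where "A2 = A - R"
  have A2: "A2 \<in> sets (F t)" unfolding A2_def using A R by blast
  have A1M: "A1 \<in> sets M" unfolding A1_def using AM sets_F_M[OF t R] by blast
  have A2M: "A2 \<in> sets M" by (rule sets_F_M[OF t A2])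
  define \<rho>' where "\<rho>' = (\<lambda>\<omega>. if \<omega> \<in> A2 then \<rho> \<omega> else T)"
  have st': "stopping_time_on M F T \<rho>'"
    unfolding stopping_time_on_def
  proof safe
    fix \<omega> assume "\<omega> \<in> space M" then show "\<rho>' \<omega> \<in> {0..T}" using st_range[OF st] T_pos unfolding \<rho>'_def by auto
  next
    fix s assume s: "s \<in> {0..T}"
    show "{\<omega> \<in> space M. \<rho>' \<omega> \<le> s} \<in> sets (F s)"
    proof (cases "T \<le> s")
      case True
      have "{\<omega> \<in> space M. \<rho>' \<omega> \<le> s} = space (F s)" using st_range[OF st] True s unfolding \<rho>'_def by auto
      then show ?thesis by simp
    next
      case False
      have eq: "{\<omega> \<in> space M. \<rho>' \<omega> \<le> s} = A2 \<inter> {\<omega> \<in> space M. \<rho> \<omega> \<le> s}"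
        using False Asp unfolding \<rho>'_def A2_def by auto
      show ?thesis
      proof (cases "s \<le> t")
        case True
        have "A2 \<inter> {\<omega> \<in> space M. \<rho> \<omega> \<le> s} = {}" using True unfolding A2_def R_def by auto
        then show ?thesis unfolding eq by simp
      next
        case False
        have "A2 \<in> sets (F s)" using A2 sets_mono[of t s] False t s by auto
        moreover have "{\<omega> \<in> space M. \<rho> \<omega> \<le> s} \<in> sets (F s)" by (rule st_le[OF st s order_refl])
        ultimately show ?thesis unfolding eq by blast
      qed
    qed
  qed
  have iY': "integrable M (\<lambda>\<omega>. X (\<rho>' \<omega>) \<omega>)" using iS st' by blast
  have iT: "integrable M (X T)" by (rule cproc_int[OF X T_in])
  have iXt: "integrable M (X t)" by (rule cproc_int[OF X t])
  have os: "(\<integral>\<omega>. X (\<rho>' \<omega>) \<omega> \<partial>M) = (\<integral>\<omega>. X T \<omega> \<partial>M)" by (rule OS0[OF X st' iY'])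
  have pw: "X (\<rho>' \<omega>) \<omega> = indicator A2 \<omega> * X (\<rho> \<omega>) \<omega> + (X T \<omega> - indicator A2 \<omega> * X T \<omega>)" for \<omega>
    unfolding \<rho>'_def by (simp add: indicator_def)
  have i1: "integrable M (\<lambda>\<omega>. indicator A2 \<omega> * X (\<rho> \<omega>) \<omega>)" by (rule ii[OF A2M iY])
  have i2: "integrable M (\<lambda>\<omega>. indicator A2 \<omega> * X T \<omega>)" by (rule ii[OF A2M iT])
  have "(\<integral>\<omega>. X (\<rho>' \<omega>) \<omega> \<partial>M) = (\<integral>\<omega>. indicator A2 \<omega> * X (\<rho> \<omega>) \<omega> \<partial>M) + ((\<integral>\<omega>. X T \<omega> \<partial>M) - (\<integral>\<omega>. indicator A2 \<omega> * X T \<omega> \<partial>M))"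
    unfolding pw using i1 i2 iT by simp
  then have e2: "(\<integral>\<omega>. indicator A2 \<omega> * X (\<rho> \<omega>) \<omega> \<partial>M) = (\<integral>\<omega>. indicator A2 \<omega> * X T \<omega> \<partial>M)"
    using os by simp
  also have "\<dots> = (\<integral>\<omega>. indicator A2 \<omega> * X t \<omega> \<partial>M)" by (rule core1[OF X t A2, symmetric])
  also have "\<dots> = (\<integral>\<omega>. indicator A2 \<omega> * X (min t (\<rho> \<omega>)) \<omega> \<partial>M)"
  proof (rule Bochner_Integration.integral_cong[OF refl])
    fix \<omega> assume "\<omega> \<in> space M"
    then show "indicator A2 \<omega> * X t \<omega> = indicator A2 \<omega> * X (min t (\<rho> \<omega>)) \<omega>"
      unfolding A2_def R_def by (auto simp: indicator_def)
  qed
  finally have E2: "(\<integral>\<omega>. indicator A2 \<omega> * X (\<rho> \<omega>) \<omega> \<partial>M) = (\<integral>\<omega>. indicator A2 \<omega> * X (min t (\<rho> \<omega>)) \<omega> \<partial>M)" .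
  have E1: "(\<integral>\<omega>. indicator A1 \<omega> * X (\<rho> \<omega>) \<omega> \<partial>M) = (\<integral>\<omega>. indicator A1 \<omega> * X (min t (\<rho> \<omega>)) \<omega> \<partial>M)"
  proof (rule Bochner_Integration.integral_cong[OF refl])
    fix \<omega> assume "\<omega> \<in> space M"
    show "indicator A1 \<omega> * X (\<rho> \<omega>) \<omega> = indicator A1 \<omega> * X (min t (\<rho> \<omega>)) \<omega>"
      unfolding A1_def R_def by (auto simp: indicator_def min_def)
  qed
  have split: "indicator A \<omega> * f \<omega> = indicator A1 \<omega> * f \<omega> + indicator A2 \<omega> * f \<omega>" for \<omega> and f :: "'a \<Rightarrow> real"
    unfolding A1_def A2_def by (auto simp: indicator_def)
  have "(\<integral>\<omega>. indicator A \<omega> * X (\<rho> \<omega>) \<omega> \<partial>M) = (\<integral>\<omega>. indicator A1 \<omega> * X (\<rho> \<omega>) \<omega> \<partial>M) + (\<integral>\<omega>. indicator A2 \<omega> * X (\<rho> \<omega>) \<omega> \<partial>M)"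
    unfolding split[of _ "\<lambda>\<omega>. X (\<rho> \<omega>) \<omega>"] using ii[OF A1M iY] i1 by simp
  also have "\<dots> = (\<integral>\<omega>. indicator A1 \<omega> * X (min t (\<rho> \<omega>)) \<omega> \<partial>M) + (\<integral>\<omega>. indicator A2 \<omega> * X (min t (\<rho> \<omega>)) \<omega> \<partial>M)"
    using E1 E2 by simp
  also have "\<dots> = (\<integral>\<omega>. indicator A \<omega> * X (min t (\<rho> \<omega>)) \<omega> \<partial>M)"
    unfolding split[of _ "\<lambda>\<omega>. X (min t (\<rho> \<omega>)) \<omega>"] using ii[OF A1M iYt] ii[OF A2M iYt] by simp
  finally show "(\<integral>\<omega>. indicator A \<omega> * X (\<rho> \<omega>) \<omega> \<partial>M) = (\<integral>\<omega>. indicator A \<omega> * X (min t (\<rho> \<omega>)) \<omega> \<partial>M)" .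
qed

end

locale nsb = fsetting M F T for M :: "'a measure" and F T +
  fixes cQ Q K q p cPbad cPgood Pbad Pnsb h :: "real \<Rightarrow> 'a \<Rightarrow> real"
    and \<tau>s \<theta>star \<tau>star \<theta> :: "'a \<Rightarrow> real"
    and cPnsb PNL HVA D vaK\<theta> :: "real \<Rightarrow> 'a \<Rightarrow> real"
  assumes \<theta>_def: "\<theta> = exit_time \<theta>star \<tau>star \<tau>s"
    and cPnsb_def: "cPnsb = nsb_flow cPbad cPgood \<tau>s \<theta>"
    and PNL_def: "PNL = pnl_nsb cQ q Q cPnsb p Pnsb h \<tau>s \<theta>"
    and HVA_def: "HVA = (\<lambda>t \<omega>. - va M F T PNL t \<omega>)"
    and D_def: "D = (\<lambda>t. cexp M F t (\<lambda>\<omega>. ind_before \<tau>s (\<theta> \<omega>) \<omega> *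
                      (Q (\<theta> \<omega>) \<omega> - (Pnsb (\<theta> \<omega>) \<omega> - Pbad (\<theta> \<omega>) \<omega>))))"
    and vaK\<theta>_def: "vaK\<theta> = va M F T (stopped K \<theta>)"
    and cQ: "cash_flow M F T cQ"
    and Q_reg: "regular_process M F T Q"
    and K: "is_drift M F T (\<lambda>t \<omega>. cQ t \<omega> + Q t \<omega>) K"
    and q_reg: "regular_process M F T q"
    and p_reg: "regular_process M F T p"
    and \<tau>s: "stopping_time_on M F T \<tau>s" and \<tau>s_pos: "\<forall>\<omega>\<in>space M. 0 < \<tau>s \<omega>"
    and cPbad: "cash_flow M F T cPbad" and cPgood: "cash_flow M F T cPgood"
    and Pbad_reg: "regular_process M F T Pbad"
    and p_Pbad: "\<forall>t\<in>{0..T}. AE \<omega> in M. t < \<tau>s \<omega> \<longrightarrow> p t \<omega> = Pbad t \<omega>"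
    and \<theta>star: "stopping_time_on M F T \<theta>star" and \<theta>star_le: "\<forall>\<omega>\<in>space M. \<theta>star \<omega> \<le> \<tau>s \<omega>"
    and \<tau>star: "stopping_time_on M F T \<tau>star" and \<tau>star_ge: "\<forall>\<omega>\<in>space M. \<tau>s \<omega> \<le> \<tau>star \<omega>"
    and zero_call: "AE \<omega> in M. ind_before \<tau>s (\<theta> \<omega>) \<omega> * q (\<theta> \<omega>) \<omega>
                      + (1 - ind_before \<tau>s (\<theta> \<omega>) \<omega>) * Q (\<theta> \<omega>) \<omega> = 0"
    and Pnsb_reg: "regular_process M F T Pnsb"
    and Pnsb_val: "\<forall>t\<in>{0..T}. AE \<omega> in M. Pnsb t \<omega> = va M F T cPnsb t \<omega>"
    and h_mart: "martingale_on M F T h"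
begin

lemma st_const: "t \<in> {0..T} \<Longrightarrow> stopping_time_on M F T (\<lambda>_. t)"
  unfolding stopping_time_on_def
proof safe
  fix s assume t: "t \<in> {0..T}" and s: "s \<in> {0..T}"
  show "{\<omega> \<in> space M. t \<le> s} \<in> sets (F s)"
  proof (cases "t \<le> s")
    case True then have "{\<omega> \<in> space M. t \<le> s} = space (F s)" using s by simp
    then show ?thesis by simp
  next
    case False then show ?thesis by simp
  qed
qed

lemma st_min2: assumes a: "stopping_time_on M F T \<sigma>" and b: "stopping_time_on M F T \<tau>"
  shows "stopping_time_on M F T (\<lambda>\<omega>. min (\<sigma> \<omega>) (\<tau> \<omega>))"
  unfolding stopping_time_on_def
proof safe
  fix \<omega> assume \<omega>: "\<omega> \<in> space M"
  have "0 \<le> \<sigma> \<omega>" "\<sigma> \<omega> \<le> T" "0 \<le> \<tau> \<omega>" "\<tau> \<omega> \<le> T" using st_range[OF a \<omega>] st_range[OF b \<omega>] by auto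
  then show "min (\<sigma> \<omega>) (\<tau> \<omega>) \<in> {0..T}" by (simp add: min_def)
next
  fix s assume s: "s \<in> {0..T}"
  have "{\<omega> \<in> space M. min (\<sigma> \<omega>) (\<tau> \<omega>) \<le> s} = {\<omega> \<in> space M. \<sigma> \<omega> \<le> s} \<union> {\<omega> \<in> space M. \<tau> \<omega> \<le> s}" by auto
  then show "{\<omega> \<in> space M. min (\<sigma> \<omega>) (\<tau> \<omega>) \<le> s} \<in> sets (F s)"
    using st_le[OF a s order_refl] st_le[OF b s order_refl] by simp
qed

lemma th_lt_iff: "\<omega> \<in> space M \<Longrightarrow> (\<theta> \<omega> < \<tau>s \<omega>) \<longleftrightarrow> (\<theta>star \<omega> < \<tau>s \<omega>)"
  unfolding \<theta>_def exit_time_def using \<tau>star_ge by auto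

lemma th_st: "stopping_time_on M F T \<theta>"
  unfolding stopping_time_on_def
proof safe
  fix \<omega> assume "\<omega> \<in> space M" then show "\<theta> \<omega> \<in> {0..T}"
    unfolding \<theta>_def exit_time_def using st_range[OF \<theta>star] st_range[OF \<tau>star] by auto
next
  fix s assume s: "s \<in> {0..T}"
  define E where "E = {\<omega>\<in>space M. \<theta>star \<omega> \<le> s \<and> \<tau>s \<omega> \<le> s \<and> min s (\<tau>s \<omega>) \<le> min s (\<theta>star \<omega>)}"
  have [measurable]: "(\<lambda>\<omega>. min s (\<tau>s \<omega>)) \<in> borel_measurable (F s)" "(\<lambda>\<omega>. min s (\<theta>star \<omega>)) \<in> borel_measurable (F s)"
    using st_meas_F[OF \<tau>s s] st_meas_F[OF \<theta>star s] by auto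
  have E1: "{\<omega>\<in>space M. min s (\<tau>s \<omega>) \<le> min s (\<theta>star \<omega>)} \<in> sets (F s)"
  proof -
    have "{\<omega>\<in>space (F s). min s (\<tau>s \<omega>) \<le> min s (\<theta>star \<omega>)} \<in> sets (F s)" by measurable
    then show ?thesis using s by simp
  qed
  have a: "{\<omega>\<in>space M. \<theta>star \<omega> \<le> s} \<in> sets (F s)" by (rule st_le[OF \<theta>star s order_refl])
  have b: "{\<omega>\<in>space M. \<tau>s \<omega> \<le> s} \<in> sets (F s)" by (rule st_le[OF \<tau>s s order_refl])
  have c: "{\<omega>\<in>space M. \<tau>star \<omega> \<le> s} \<in> sets (F s)" by (rule st_le[OF \<tau>star s order_refl])
  have Es: "E \<in> sets (F s)"
  proof -
    have "E = {\<omega>\<in>space M. \<theta>star \<omega> \<le> s} \<inter> {\<omega>\<in>space M. \<tau>s \<omega> \<le> s} \<inter> {\<omega>\<in>space M. min s (\<tau>s \<omega>) \<le> min s (\<theta>star \<omega>)}"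
      unfolding E_def by auto
    then show ?thesis using a b E1 by simp
  qed
  have "{\<omega> \<in> space M. \<theta> \<omega> \<le> s} = ({\<omega>\<in>space M. \<theta>star \<omega> \<le> s} - E) \<union> ({\<omega>\<in>space M. \<tau>star \<omega> \<le> s} \<inter> E)"
  proof (intro set_eqI iffI)
    fix \<omega> assume "\<omega> \<in> {\<omega> \<in> space M. \<theta> \<omega> \<le> s}"
    then have \<omega>: "\<omega> \<in> space M" and le: "\<theta> \<omega> \<le> s" by auto
    have h1: "\<theta>star \<omega> \<le> \<tau>s \<omega>" "\<tau>s \<omega> \<le> \<tau>star \<omega>" using \<theta>star_le \<tau>star_ge \<omega> by auto
    show "\<omega> \<in> ({\<omega>\<in>space M. \<theta>star \<omega> \<le> s} - E) \<union> ({\<omega>\<in>space M. \<tau>star \<omega> \<le> s} \<inter> E)"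
    proof (cases "\<theta>star \<omega> < \<tau>s \<omega>")
      case True
      then have "\<theta> \<omega> = \<theta>star \<omega>" unfolding \<theta>_def exit_time_def by simp
      then show ?thesis using True le \<omega> unfolding E_def by auto
    next
      case False
      then have "\<theta> \<omega> = \<tau>star \<omega>" unfolding \<theta>_def exit_time_def by simp
      then show ?thesis using False le \<omega> h1 unfolding E_def by auto
    qed
  next
    fix \<omega> assume h: "\<omega> \<in> ({\<omega>\<in>space M. \<theta>star \<omega> \<le> s} - E) \<union> ({\<omega>\<in>space M. \<tau>star \<omega> \<le> s} \<inter> E)"
    then have \<omega>: "\<omega> \<in> space M" by auto
    have h1: "\<theta>star \<omega> \<le> \<tau>s \<omega>" "\<tau>s \<omega> \<le> \<tau>star \<omega>" using \<theta>star_le \<tau>star_ge \<omega> by auto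
    show "\<omega> \<in> {\<omega> \<in> space M. \<theta> \<omega> \<le> s}"
    proof (cases "\<theta>star \<omega> < \<tau>s \<omega>")
      case True
      then have "\<theta> \<omega> = \<theta>star \<omega>" unfolding \<theta>_def exit_time_def by simp
      then show ?thesis using True h \<omega> unfolding E_def by auto
    next
      case False
      then have "\<theta> \<omega> = \<tau>star \<omega>" unfolding \<theta>_def exit_time_def by simp
      then show ?thesis using False h \<omega> h1 unfolding E_def by auto
    qed
  qed
  then show "{\<omega> \<in> space M. \<theta> \<omega> \<le> s} \<in> sets (F s)" using a c Es by simp
qed

lemma th_range: "\<omega> \<in> space M \<Longrightarrow> 0 \<le> \<theta> \<omega> \<and> \<theta> \<omega> \<le> T"
  using st_range[OF th_st] by blast

lemma reg_ad: "regular_process M F T X \<Longrightarrow> \<forall>s\<in>{0..T}. X s \<in> borel_measurable (F s)"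
  unfolding regular_process_def adapted_def by blast

lemma cad_rc: "cadlag_process M T X \<Longrightarrow> \<forall>\<omega>\<in>space M. \<forall>s\<in>{0..<T}. ((\<lambda>u. X u \<omega>) \<longlongrightarrow> X s \<omega>) (at_right s)"
  unfolding cadlag_process_def cadlag_on_def by blast

lemma reg_rc: "regular_process M F T X \<Longrightarrow> \<forall>\<omega>\<in>space M. \<forall>s\<in>{0..<T}. ((\<lambda>u. X u \<omega>) \<longlongrightarrow> X s \<omega>) (at_right s)"
  unfolding regular_process_def using cad_rc by blast

lemma reg_int: "regular_process M F T X \<Longrightarrow> stopping_time_on M F T \<sigma> \<Longrightarrow> integrable M (\<lambda>\<omega>. X (\<sigma> \<omega>) \<omega>)"
  unfolding regular_process_def integrable_at_stopping_def by blast

lemma reg_int_t: "regular_process M F T X \<Longrightarrow> t \<in> {0..T} \<Longrightarrow> integrable M (X t)"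
  using reg_int[OF _ st_const, of X t] by simp

lemma cf_reg: "cash_flow M F T X \<Longrightarrow> regular_process M F T X"
  unfolding cash_flow_def by blast

end

context nsb
begin

definition I1 :: "real \<Rightarrow> 'a \<Rightarrow> real" where
  "I1 t \<omega> = (if \<tau>s \<omega> \<le> t \<and> min t (\<theta>star \<omega>) < min t (\<tau>s \<omega>) then 1 else 0)"
definition I2 :: "real \<Rightarrow> 'a \<Rightarrow> real" where
  "I2 t \<omega> = (if \<tau>s \<omega> \<le> t \<and> \<not> min t (\<theta>star \<omega>) < min t (\<tau>s \<omega>) then 1 else 0)"

lemma cPnsb_alt: assumes \<omega>: "\<omega> \<in> space M"
  shows "cPnsb t \<omega> = cPbad (min t (\<tau>s \<omega>)) \<omega> + I1 t \<omega> * (cPbad t \<omega> - cPbad (min t (\<tau>s \<omega>)) \<omega>)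
           + I2 t \<omega> * (cPgood t \<omega> - cPgood (min t (\<tau>s \<omega>)) \<omega>)"
proof (cases "\<tau>s \<omega> \<le> t")
  case True
  have le: "\<theta>star \<omega> \<le> \<tau>s \<omega>" using \<theta>star_le \<omega> by auto
  have m1: "min t (\<tau>s \<omega>) = \<tau>s \<omega>" "min t (\<theta>star \<omega>) = \<theta>star \<omega>" using True le by auto
  have "ind_before \<tau>s (\<theta> \<omega>) \<omega> = (if \<theta>star \<omega> < \<tau>s \<omega> then 1 else 0)"
    unfolding ind_before_def using th_lt_iff[OF \<omega>] by simp
  then show ?thesis unfolding cPnsb_def nsb_flow_def stopped_def I1_def I2_def m1
    using True by (simp add: ind_before_def)
next
  case False
  then show ?thesis unfolding cPnsb_def nsb_flow_def stopped_def I1_def I2_def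
    by (simp add: ind_before_def)
qed

lemma pred_le_F: assumes t: "t \<in> {0..T}" and st: "stopping_time_on M F T \<sigma>"
  shows "Measurable.pred (F t) (\<lambda>\<omega>. \<sigma> \<omega> \<le> t)"
  unfolding pred_def using st_le[OF st t order_refl] t by simp

lemma cPnsb_ad: assumes t: "t \<in> {0..T}" shows "cPnsb t \<in> borel_measurable (F t)"
proof -
  have rb: "regular_process M F T cPbad" "regular_process M F T cPgood"
    using cf_reg cPbad cPgood by auto
  have [measurable]: "(\<lambda>\<omega>. cPbad (min t (\<tau>s \<omega>)) \<omega>) \<in> borel_measurable (F t)"
    by (rule progressive[OF reg_ad[OF rb(1)] reg_rc[OF rb(1)] \<tau>s t])
  have [measurable]: "(\<lambda>\<omega>. cPgood (min t (\<tau>s \<omega>)) \<omega>) \<in> borel_measurable (F t)"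
    by (rule progressive[OF reg_ad[OF rb(2)] reg_rc[OF rb(2)] \<tau>s t])
  have [measurable]: "cPbad t \<in> borel_measurable (F t)" "cPgood t \<in> borel_measurable (F t)"
    using reg_ad[OF rb(1)] reg_ad[OF rb(2)] t by auto
  have [measurable]: "(\<lambda>\<omega>. min t (\<tau>s \<omega>)) \<in> borel_measurable (F t)" "(\<lambda>\<omega>. min t (\<theta>star \<omega>)) \<in> borel_measurable (F t)"
    using st_meas_F[OF \<tau>s t] st_meas_F[OF \<theta>star t] by auto
  have [measurable]: "Measurable.pred (F t) (\<lambda>\<omega>. \<tau>s \<omega> \<le> t)" by (rule pred_le_F[OF t \<tau>s])
  have m: "(\<lambda>\<omega>. cPbad (min t (\<tau>s \<omega>)) \<omega> + I1 t \<omega> * (cPbad t \<omega> - cPbad (min t (\<tau>s \<omega>)) \<omega>)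
           + I2 t \<omega> * (cPgood t \<omega> - cPgood (min t (\<tau>s \<omega>)) \<omega>)) \<in> borel_measurable (F t)"
    unfolding I1_def I2_def by measurable
  have "cPnsb t \<in> borel_measurable (F t) \<longleftrightarrow> (\<lambda>\<omega>. cPbad (min t (\<tau>s \<omega>)) \<omega> + I1 t \<omega> * (cPbad t \<omega> - cPbad (min t (\<tau>s \<omega>)) \<omega>)
           + I2 t \<omega> * (cPgood t \<omega> - cPgood (min t (\<tau>s \<omega>)) \<omega>)) \<in> borel_measurable (F t)"
    by (rule measurable_cong) (use cPnsb_alt t in simp)
  then show ?thesis using m by blast
qed

lemma cPnsb_rc: "\<forall>\<omega>\<in>space M. \<forall>s\<in>{0..<T}. ((\<lambda>u. cPnsb u \<omega>) \<longlongrightarrow> cPnsb s \<omega>) (at_right s)"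
proof (intro ballI)
  fix \<omega> s assume \<omega>: "\<omega> \<in> space M" and s: "s \<in> {0..<T}"
  have rb: "regular_process M F T cPbad" "regular_process M F T cPgood"
    using cf_reg cPbad cPgood by auto
  have r1: "((\<lambda>u. cPbad u \<omega>) \<longlongrightarrow> cPbad s \<omega>) (at_right s)" using reg_rc[OF rb(1)] \<omega> s by blast
  have r2: "((\<lambda>u. cPgood u \<omega>) \<longlongrightarrow> cPgood s \<omega>) (at_right s)" using reg_rc[OF rb(2)] \<omega> s by blast
  define J where "J = ind_before \<tau>s (\<theta> \<omega>) \<omega>"
  show "((\<lambda>u. cPnsb u \<omega>) \<longlongrightarrow> cPnsb s \<omega>) (at_right s)"
  proof (cases "s < \<tau>s \<omega>")
    case True
    have ev: "eventually (\<lambda>u. u \<in> {s<..<\<tau>s \<omega>}) (at_right s)" by (rule eventually_at_right_real[OF True])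
    have "eventually (\<lambda>u. cPbad u \<omega> = cPnsb u \<omega>) (at_right s)"
      using ev by eventually_elim (auto simp: cPnsb_def nsb_flow_def stopped_def ind_before_def)
    moreover have "cPnsb s \<omega> = cPbad s \<omega>" using True by (simp add: cPnsb_def nsb_flow_def stopped_def ind_before_def)
    ultimately show ?thesis using Lim_transform_eventually[OF r1] by simp
  next
    case False
    define g where "g = (\<lambda>u. cPbad (\<tau>s \<omega>) \<omega> + J * (cPbad u \<omega> - cPbad (\<tau>s \<omega>) \<omega>)
                          + (1 - J) * (cPgood u \<omega> - cPgood (\<tau>s \<omega>) \<omega>))"
    have gl: "(g \<longlongrightarrow> g s) (at_right s)" unfolding g_def
      by (intro tendsto_add tendsto_mult tendsto_diff tendsto_const r1 r2)
    have ev: "eventually (\<lambda>u. s < u) (at_right s)" by (rule eventually_at_right_less)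
    have "eventually (\<lambda>u. g u = cPnsb u \<omega>) (at_right s)"
      using ev
    proof eventually_elim
      fix u assume "s < u"
      then have "\<not> u < \<tau>s \<omega>" "min u (\<tau>s \<omega>) = \<tau>s \<omega>" using False by auto
      then show "g u = cPnsb u \<omega>" unfolding g_def J_def cPnsb_def nsb_flow_def stopped_def
        by (simp add: ind_before_def)
    qed
    moreover have "cPnsb s \<omega> = g s"
    proof -
      have "\<not> s < \<tau>s \<omega>" "min s (\<tau>s \<omega>) = \<tau>s \<omega>" using False by auto
      then show ?thesis unfolding g_def J_def cPnsb_def nsb_flow_def stopped_def
        by (simp add: ind_before_def)
    qed
    ultimately show ?thesis using Lim_transform_eventually[OF gl] by simp
  qed
qed

lemma cPnsb_int: assumes st: "stopping_time_on M F T \<sigma>"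
  shows "integrable M (\<lambda>\<omega>. cPnsb (\<sigma> \<omega>) \<omega>)"
proof -
  have rb: "regular_process M F T cPbad" "regular_process M F T cPgood"
    using cf_reg cPbad cPgood by auto
  have stm: "stopping_time_on M F T (\<lambda>\<omega>. min (\<sigma> \<omega>) (\<tau>s \<omega>))" by (rule st_min2[OF st \<tau>s])
  have i1: "integrable M (\<lambda>\<omega>. cPbad (min (\<sigma> \<omega>) (\<tau>s \<omega>)) \<omega>)" by (rule reg_int[OF rb(1) stm])
  have i2: "integrable M (\<lambda>\<omega>. cPbad (\<sigma> \<omega>) \<omega>)" by (rule reg_int[OF rb(1) st])
  have i3: "integrable M (\<lambda>\<omega>. cPbad (\<tau>s \<omega>) \<omega>)" by (rule reg_int[OF rb(1) \<tau>s])
  have i4: "integrable M (\<lambda>\<omega>. cPgood (\<sigma> \<omega>) \<omega>)" by (rule reg_int[OF rb(2) st])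
  have i5: "integrable M (\<lambda>\<omega>. cPgood (\<tau>s \<omega>) \<omega>)" by (rule reg_int[OF rb(2) \<tau>s])
  have [measurable]: "(\<lambda>\<omega>. cPbad (min (\<sigma> \<omega>) (\<tau>s \<omega>)) \<omega>) \<in> borel_measurable M"
     "(\<lambda>\<omega>. cPbad (\<sigma> \<omega>) \<omega>) \<in> borel_measurable M" "(\<lambda>\<omega>. cPbad (\<tau>s \<omega>) \<omega>) \<in> borel_measurable M"
     "(\<lambda>\<omega>. cPgood (\<sigma> \<omega>) \<omega>) \<in> borel_measurable M" "(\<lambda>\<omega>. cPgood (\<tau>s \<omega>) \<omega>) \<in> borel_measurable M"
    using i1 i2 i3 i4 i5 by auto
  have [measurable]: "\<sigma> \<in> borel_measurable M" "\<tau>s \<in> borel_measurable M" "\<theta> \<in> borel_measurable M"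
    using st_meas[OF st] st_meas[OF \<tau>s] st_meas[OF th_st] by auto
  have eq: "cPnsb (\<sigma> \<omega>) \<omega> = cPbad (min (\<sigma> \<omega>) (\<tau>s \<omega>)) \<omega>
     + (1 - (if \<sigma> \<omega> < \<tau>s \<omega> then 1 else 0)) * (if \<theta> \<omega> < \<tau>s \<omega> then 1 else 0) * (cPbad (\<sigma> \<omega>) \<omega> - cPbad (\<tau>s \<omega>) \<omega>)
     + (1 - (if \<sigma> \<omega> < \<tau>s \<omega> then 1 else 0)) * (1 - (if \<theta> \<omega> < \<tau>s \<omega> then 1 else 0)) * (cPgood (\<sigma> \<omega>) \<omega> - cPgood (\<tau>s \<omega>) \<omega>)" for \<omega>
    unfolding cPnsb_def nsb_flow_def stopped_def ind_before_def ..
  show ?thesis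
    unfolding eq
  proof (rule Bochner_Integration.integrable_bound[where f="\<lambda>\<omega>. \<bar>cPbad (min (\<sigma> \<omega>) (\<tau>s \<omega>)) \<omega>\<bar> + \<bar>cPbad (\<sigma> \<omega>) \<omega>\<bar> + \<bar>cPbad (\<tau>s \<omega>) \<omega>\<bar> + \<bar>cPgood (\<sigma> \<omega>) \<omega>\<bar> + \<bar>cPgood (\<tau>s \<omega>) \<omega>\<bar>"])
    show "integrable M (\<lambda>\<omega>. \<bar>cPbad (min (\<sigma> \<omega>) (\<tau>s \<omega>)) \<omega>\<bar> + \<bar>cPbad (\<sigma> \<omega>) \<omega>\<bar> + \<bar>cPbad (\<tau>s \<omega>) \<omega>\<bar> + \<bar>cPgood (\<sigma> \<omega>) \<omega>\<bar> + \<bar>cPgood (\<tau>s \<omega>) \<omega>\<bar>)"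
      using i1 i2 i3 i4 i5 by simp
    show "(\<lambda>\<omega>. cPbad (min (\<sigma> \<omega>) (\<tau>s \<omega>)) \<omega>
     + (1 - (if \<sigma> \<omega> < \<tau>s \<omega> then 1 else 0)) * (if \<theta> \<omega> < \<tau>s \<omega> then 1 else 0) * (cPbad (\<sigma> \<omega>) \<omega> - cPbad (\<tau>s \<omega>) \<omega>)
     + (1 - (if \<sigma> \<omega> < \<tau>s \<omega> then 1 else 0)) * (1 - (if \<theta> \<omega> < \<tau>s \<omega> then 1 else 0)) * (cPgood (\<sigma> \<omega>) \<omega> - cPgood (\<tau>s \<omega>) \<omega>)) \<in> borel_measurable M"
      by measurable
    show "AE \<omega> in M. norm (cPbad (min (\<sigma> \<omega>) (\<tau>s \<omega>)) \<omega>
     + (1 - (if \<sigma> \<omega> < \<tau>s \<omega> then 1 else 0)) * (if \<theta> \<omega> < \<tau>s \<omega> then 1 else 0) * (cPbad (\<sigma> \<omega>) \<omega> - cPbad (\<tau>s \<omega>) \<omega>)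
     + (1 - (if \<sigma> \<omega> < \<tau>s \<omega> then 1 else 0)) * (1 - (if \<theta> \<omega> < \<tau>s \<omega> then 1 else 0)) * (cPgood (\<sigma> \<omega>) \<omega> - cPgood (\<tau>s \<omega>) \<omega>))
     \<le> norm (\<bar>cPbad (min (\<sigma> \<omega>) (\<tau>s \<omega>)) \<omega>\<bar> + \<bar>cPbad (\<sigma> \<omega>) \<omega>\<bar> + \<bar>cPbad (\<tau>s \<omega>) \<omega>\<bar> + \<bar>cPgood (\<sigma> \<omega>) \<omega>\<bar> + \<bar>cPgood (\<tau>s \<omega>) \<omega>\<bar>)"
      by (rule AE_I2) (auto simp: abs_if split: if_splits)
  qed
qed

end

context nsb
begin

lemma X2_cproc: "cproc (\<lambda>t \<omega>. cPnsb t \<omega> + Pnsb t \<omega>)"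
  unfolding cproc_def
proof (intro conjI)
  show "\<forall>s\<in>{0..T}. (\<lambda>\<omega>. cPnsb s \<omega> + Pnsb s \<omega>) \<in> borel_measurable (F s)"
  proof
    fix s assume s: "s \<in> {0..T}"
    have [measurable]: "cPnsb s \<in> borel_measurable (F s)" "Pnsb s \<in> borel_measurable (F s)"
      using cPnsb_ad[OF s] reg_ad[OF Pnsb_reg] s by auto
    show "(\<lambda>\<omega>. cPnsb s \<omega> + Pnsb s \<omega>) \<in> borel_measurable (F s)" by measurable
  qed
  show "\<forall>\<omega>\<in>space M. \<forall>s\<in>{0..<T}. ((\<lambda>u. cPnsb u \<omega> + Pnsb u \<omega>) \<longlongrightarrow> cPnsb s \<omega> + Pnsb s \<omega>) (at_right s)"
  proof (intro ballI)
    fix \<omega> s assume "\<omega> \<in> space M" "s \<in> {0..<T}"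
    then show "((\<lambda>u. cPnsb u \<omega> + Pnsb u \<omega>) \<longlongrightarrow> cPnsb s \<omega> + Pnsb s \<omega>) (at_right s)"
      using cPnsb_rc reg_rc[OF Pnsb_reg] by (intro tendsto_add) auto
  qed
  have ic: "integrable M (cPnsb s)" if "s \<in> {0..T}" for s using cPnsb_int[OF st_const[OF that]] by simp
  have ip: "integrable M (Pnsb s)" if "s \<in> {0..T}" for s by (rule reg_int_t[OF Pnsb_reg that])
  show "\<forall>s\<in>{0..T}. integrable M (\<lambda>\<omega>. cPnsb s \<omega> + Pnsb s \<omega>)" using ic ip by simp
  show "\<forall>s\<in>{0..T}. AE \<omega> in M. cexp M F s (\<lambda>\<omega>. cPnsb T \<omega> + Pnsb T \<omega>) \<omega> = cPnsb s \<omega> + Pnsb s \<omega>"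
  proof
    fix s assume s: "s \<in> {0..T}"
    have [measurable]: "cPnsb T \<in> borel_measurable M" "Pnsb T \<in> borel_measurable M" "cPnsb s \<in> borel_measurable M"
      using ic[OF T_in] ip[OF T_in] ic[OF s] by auto
    have PT: "AE \<omega> in M. Pnsb T \<omega> = 0"
    proof -
      have a0: "AE \<omega> in M. Pnsb T \<omega> = cexp M F T (\<lambda>\<omega>. cPnsb T \<omega> - cPnsb T \<omega>) \<omega>" using Pnsb_val T_in unfolding va_def by blast
      have "(\<lambda>\<omega>. cPnsb T \<omega> - cPnsb T \<omega>) = (\<lambda>\<omega>. 0)" by simp
      then have a: "AE \<omega> in M. Pnsb T \<omega> = cexp M F T (\<lambda>\<omega>. 0) \<omega>" using a0 by simp
      have b: "AE \<omega> in M. cexp M F T (\<lambda>\<omega>. 0) \<omega> = 0" by (rule ce_F[OF T_in]) auto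
      show ?thesis using a b by eventually_elim simp
    qed
    have a1: "AE \<omega> in M. cexp M F s (\<lambda>\<omega>. cPnsb T \<omega> + Pnsb T \<omega>) \<omega> = cexp M F s (cPnsb T) \<omega>"
      by (rule ce_cong[OF s]) (use PT in auto)
    have a2: "AE \<omega> in M. Pnsb s \<omega> = cexp M F s (\<lambda>\<omega>. cPnsb T \<omega> - cPnsb s \<omega>) \<omega>" using Pnsb_val s unfolding va_def by simp
    have a3: "AE \<omega> in M. cexp M F s (\<lambda>\<omega>. cPnsb T \<omega> - cPnsb s \<omega>) \<omega> = cexp M F s (cPnsb T) \<omega> - cexp M F s (cPnsb s) \<omega>"
      by (rule ce_diff[OF s ic[OF T_in] ic[OF s]])
    have a4: "AE \<omega> in M. cexp M F s (cPnsb s) \<omega> = cPnsb s \<omega>" by (rule ce_F[OF s ic[OF s] cPnsb_ad[OF s]])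
    show "AE \<omega> in M. cexp M F s (\<lambda>\<omega>. cPnsb T \<omega> + Pnsb T \<omega>) \<omega> = cPnsb s \<omega> + Pnsb s \<omega>"
      using a1 a2 a3 a4 by eventually_elim simp
  qed
qed

lemma X2_int: "stopping_time_on M F T \<sigma> \<Longrightarrow> integrable M (\<lambda>\<omega>. cPnsb (\<sigma> \<omega>) \<omega> + Pnsb (\<sigma> \<omega>) \<omega>)"
  using cPnsb_int reg_int[OF Pnsb_reg] by simp

lemma K_props: "(\<forall>\<omega>\<in>space M. mono_on {0..T} (\<lambda>t. K t \<omega>) \<and> K 0 \<omega> = 0)"
  "cadlag_process M T K" "martingale_on M F T (\<lambda>t \<omega>. cQ t \<omega> + Q t \<omega> + K t \<omega>)"
  using K unfolding is_drift_def by auto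

lemma K_ad: "t \<in> {0..T} \<Longrightarrow> K t \<in> borel_measurable (F t)"
proof -
  assume t: "t \<in> {0..T}"
  have cQr: "regular_process M F T cQ" using cf_reg cQ by auto
  have [measurable]: "(\<lambda>\<omega>. cQ t \<omega> + Q t \<omega> + K t \<omega>) \<in> borel_measurable (F t)"
    using K_props(3) t unfolding martingale_on_def adapted_def by blast
  have [measurable]: "cQ t \<in> borel_measurable (F t)" "Q t \<in> borel_measurable (F t)"
    using reg_ad[OF cQr] reg_ad[OF Q_reg] t by auto
  have "(\<lambda>\<omega>. (cQ t \<omega> + Q t \<omega> + K t \<omega>) - cQ t \<omega> - Q t \<omega>) \<in> borel_measurable (F t)" by measurable
  then show ?thesis by simp
qed

lemma K_int: assumes st: "stopping_time_on M F T \<sigma>" shows "integrable M (\<lambda>\<omega>. K (\<sigma> \<omega>) \<omega>)"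
proof -
  have m1: "(\<lambda>\<omega>. K (min T (\<sigma> \<omega>)) \<omega>) \<in> borel_measurable (F T)"
    by (rule progressive[OF _ cad_rc[OF K_props(2)] st T_in]) (use K_ad in blast)
  have m2: "(\<lambda>\<omega>. K (min T (\<sigma> \<omega>)) \<omega>) \<in> borel_measurable M" by (rule meas_M[OF m1 T_in])
  have "(\<lambda>\<omega>. K (min T (\<sigma> \<omega>)) \<omega>) \<in> borel_measurable M \<longleftrightarrow> (\<lambda>\<omega>. K (\<sigma> \<omega>) \<omega>) \<in> borel_measurable M"
    by (rule measurable_cong) (use st_range[OF st] in auto)
  then have m: "(\<lambda>\<omega>. K (\<sigma> \<omega>) \<omega>) \<in> borel_measurable M" using m2 by blast
  have iKT: "integrable M (K T)" using K_props(3) T_in unfolding martingale_on_def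
  proof -
    have "integrable M (\<lambda>\<omega>. cQ T \<omega> + Q T \<omega> + K T \<omega>)" using K_props(3) T_in unfolding martingale_on_def by blast
    moreover have "integrable M (cQ T)" "integrable M (Q T)" using reg_int_t[OF cf_reg[OF cQ] T_in] reg_int_t[OF Q_reg T_in] by auto
    ultimately have "integrable M (\<lambda>\<omega>. (cQ T \<omega> + Q T \<omega> + K T \<omega>) - cQ T \<omega> - Q T \<omega>)"
      by (intro Bochner_Integration.integrable_diff)
    then show ?thesis by simp
  qed
  show ?thesis
  proof (rule Bochner_Integration.integrable_bound[OF iKT m], rule AE_I2)
    fix \<omega> assume \<omega>: "\<omega> \<in> space M"
    have mo: "mono_on {0..T} (\<lambda>t. K t \<omega>)" and K0: "K 0 \<omega> = 0" using K_props(1) \<omega> by auto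
    have r: "0 \<le> \<sigma> \<omega>" "\<sigma> \<omega> \<le> T" using st_range[OF st \<omega>] by auto
    have "K 0 \<omega> \<le> K (\<sigma> \<omega>) \<omega>" using mono_onD[OF mo, of 0 "\<sigma> \<omega>"] r T_pos by auto
    moreover have "K (\<sigma> \<omega>) \<omega> \<le> K T \<omega>" using mono_onD[OF mo, of "\<sigma> \<omega>" T] r T_pos by auto
    ultimately show "norm (K (\<sigma> \<omega>) \<omega>) \<le> norm (K T \<omega>)" using K0 by simp
  qed
qed

lemma X1_cproc: "cproc (\<lambda>t \<omega>. cQ t \<omega> + Q t \<omega> + K t \<omega>)"
  unfolding cproc_def
proof (intro conjI)
  have mart: "martingale_on M F T (\<lambda>t \<omega>. cQ t \<omega> + Q t \<omega> + K t \<omega>)" by (rule K_props(3))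
  show "\<forall>s\<in>{0..T}. (\<lambda>\<omega>. cQ s \<omega> + Q s \<omega> + K s \<omega>) \<in> borel_measurable (F s)"
    using mart unfolding martingale_on_def adapted_def by blast
  have rc1: "\<forall>\<omega>\<in>space M. \<forall>s\<in>{0..<T}. ((\<lambda>u. cQ u \<omega>) \<longlongrightarrow> cQ s \<omega>) (at_right s)" by (rule reg_rc[OF cf_reg[OF cQ]])
  have rc2: "\<forall>\<omega>\<in>space M. \<forall>s\<in>{0..<T}. ((\<lambda>u. Q u \<omega>) \<longlongrightarrow> Q s \<omega>) (at_right s)" by (rule reg_rc[OF Q_reg])
  have rc3: "\<forall>\<omega>\<in>space M. \<forall>s\<in>{0..<T}. ((\<lambda>u. K u \<omega>) \<longlongrightarrow> K s \<omega>) (at_right s)" by (rule cad_rc[OF K_props(2)])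
  show "\<forall>\<omega>\<in>space M. \<forall>s\<in>{0..<T}. ((\<lambda>u. cQ u \<omega> + Q u \<omega> + K u \<omega>) \<longlongrightarrow> cQ s \<omega> + Q s \<omega> + K s \<omega>) (at_right s)"
  proof (intro ballI)
    fix \<omega> s assume "\<omega> \<in> space M" "s \<in> {0..<T}"
    then show "((\<lambda>u. cQ u \<omega> + Q u \<omega> + K u \<omega>) \<longlongrightarrow> cQ s \<omega> + Q s \<omega> + K s \<omega>) (at_right s)"
      using rc1 rc2 rc3 by (intro tendsto_add) auto
  qed
  show "\<forall>s\<in>{0..T}. integrable M (\<lambda>\<omega>. cQ s \<omega> + Q s \<omega> + K s \<omega>)"
    using mart unfolding martingale_on_def by blast
  show "\<forall>s\<in>{0..T}. AE \<omega> in M. cexp M F s (\<lambda>\<omega>. cQ T \<omega> + Q T \<omega> + K T \<omega>) \<omega> = cQ s \<omega> + Q s \<omega> + K s \<omega>"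
    using mart T_pos unfolding martingale_on_def by auto
qed

lemma X1_int: "stopping_time_on M F T \<sigma> \<Longrightarrow> integrable M (\<lambda>\<omega>. cQ (\<sigma> \<omega>) \<omega> + Q (\<sigma> \<omega>) \<omega> + K (\<sigma> \<omega>) \<omega>)"
  using reg_int[OF cf_reg[OF cQ]] reg_int[OF Q_reg] K_int by simp

lemma OS1: "t \<in> {0..T} \<Longrightarrow> AE \<omega> in M. cexp M F t (\<lambda>\<omega>. cQ (\<theta> \<omega>) \<omega> + Q (\<theta> \<omega>) \<omega> + K (\<theta> \<omega>) \<omega>) \<omega>
   = cQ (min t (\<theta> \<omega>)) \<omega> + Q (min t (\<theta> \<omega>)) \<omega> + K (min t (\<theta> \<omega>)) \<omega>"
  using OS[OF X1_cproc th_st, of t] X1_int by simp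

lemma OS2: "t \<in> {0..T} \<Longrightarrow> AE \<omega> in M. cexp M F t (\<lambda>\<omega>. cPnsb (\<theta> \<omega>) \<omega> + Pnsb (\<theta> \<omega>) \<omega>) \<omega>
   = cPnsb (min t (\<theta> \<omega>)) \<omega> + Pnsb (min t (\<theta> \<omega>)) \<omega>"
  using OS[OF X2_cproc th_st, of t] X2_int by simp

end

context nsb
begin

lemma path_pPbad: "AE \<omega> in M. \<forall>s. 0 \<le> s \<and> s \<le> T \<and> s < \<tau>s \<omega> \<longrightarrow> p s \<omega> = Pbad s \<omega>"
proof -
  define R where "R = \<rat> \<inter> {0..T}"
  have cR: "countable R" unfolding R_def by (rule countable_Int1[OF countable_rat])
  have h0: "\<forall>r\<in>R. AE \<omega> in M. r < \<tau>s \<omega> \<longrightarrow> p r \<omega> = Pbad r \<omega>" using p_Pbad unfolding R_def by blast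
  have ae: "AE \<omega> in M. \<forall>r\<in>R. r < \<tau>s \<omega> \<longrightarrow> p r \<omega> = Pbad r \<omega>"
    using iffD2[OF AE_ball_countable[OF cR] h0] .
  have rcp: "\<forall>\<omega>\<in>space M. \<forall>s\<in>{0..<T}. ((\<lambda>u. p u \<omega>) \<longlongrightarrow> p s \<omega>) (at_right s)" by (rule reg_rc[OF p_reg])
  have rcb: "\<forall>\<omega>\<in>space M. \<forall>s\<in>{0..<T}. ((\<lambda>u. Pbad u \<omega>) \<longlongrightarrow> Pbad s \<omega>) (at_right s)" by (rule reg_rc[OF Pbad_reg])
  show ?thesis
    using ae AE_space
  proof eventually_elim
    fix \<omega> assume h: "\<forall>r\<in>R. r < \<tau>s \<omega> \<longrightarrow> p r \<omega> = Pbad r \<omega>" and \<omega>: "\<omega> \<in> space M"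
    show "\<forall>s. 0 \<le> s \<and> s \<le> T \<and> s < \<tau>s \<omega> \<longrightarrow> p s \<omega> = Pbad s \<omega>"
    proof (intro allI impI)
      fix s assume s: "0 \<le> s \<and> s \<le> T \<and> s < \<tau>s \<omega>"
      have tT: "\<tau>s \<omega> \<le> T" using st_range[OF \<tau>s \<omega>] by simp
      have ex: "\<exists>r\<in>\<rat>. s < r \<and> r < min (\<tau>s \<omega>) (s + 1 / real (Suc n))" for n
        by (rule Rats_dense_in_real) (use s in simp)
      define r where "r = (\<lambda>n. SOME r. r \<in> \<rat> \<and> s < r \<and> r < min (\<tau>s \<omega>) (s + 1 / real (Suc n)))"
      have r: "r n \<in> \<rat> \<and> s < r n \<and> r n < min (\<tau>s \<omega>) (s + 1 / real (Suc n))" for n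
        unfolding r_def by (rule someI_ex) (use ex[of n] in blast)
      have rR: "r n \<in> R" for n using r[of n] s tT unfolding R_def by auto
      have eq: "p (r n) \<omega> = Pbad (r n) \<omega>" for n using h rR[of n] r[of n] by auto
      have l1: "(\<lambda>n. s + 1 / real (Suc n)) \<longlonglongrightarrow> s + 0"
        by (intro tendsto_add tendsto_const LIMSEQ_Suc[OF lim_const_over_n])
      have rl: "r \<longlonglongrightarrow> s"
      proof (rule tendsto_sandwich[of "\<lambda>_. s" _ _ "\<lambda>n. s + 1 / real (Suc n)"])
        show "eventually (\<lambda>n. s \<le> r n) sequentially" using r by (intro always_eventually) (auto intro: less_imp_le)
        show "eventually (\<lambda>n. r n \<le> s + 1 / real (Suc n)) sequentially" using r by (intro always_eventually) (auto intro: less_imp_le)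
      qed (use l1 in auto)
      have sT: "s \<in> {0..<T}" using s tT by auto
      have ge: "\<And>n. s \<le> r n" using r by (auto intro: less_imp_le)
      have lp: "(\<lambda>n. p (r n) \<omega>) \<longlonglongrightarrow> p s \<omega>"
        by (rule rc_seq[where f="\<lambda>u. p u \<omega>", OF _ rl ge]) (use rcp \<omega> sT in blast)
      have lb: "(\<lambda>n. Pbad (r n) \<omega>) \<longlonglongrightarrow> Pbad s \<omega>"
        by (rule rc_seq[where f="\<lambda>u. Pbad u \<omega>", OF _ rl ge]) (use rcb \<omega> sT in blast)
      have lp2: "(\<lambda>n. Pbad (r n) \<omega>) \<longlonglongrightarrow> p s \<omega>" using lp unfolding eq .
      show "p s \<omega> = Pbad s \<omega>" by (rule LIMSEQ_unique[OF lp2 lb])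
    qed
  qed
qed

lemma part1: "\<forall>t\<in>{0..T}. AE \<omega> in M. PNL t \<omega> =
        from0 (stopped (\<lambda>t \<omega>. cQ t \<omega> + ind_before \<tau>s t \<omega> * q t \<omega> + (1 - ind_before \<tau>s t \<omega>) * Q t \<omega>) \<theta>) t \<omega>
        - from0 (stopped (\<lambda>t \<omega>. cPnsb t \<omega> + ind_before \<tau>s t \<omega> * Pbad t \<omega> + (1 - ind_before \<tau>s t \<omega>) * Pnsb t \<omega>) \<theta>) t \<omega>
        - h t \<omega>"
proof
  fix t assume t: "t \<in> {0..T}"
  show "AE \<omega> in M. PNL t \<omega> =
        from0 (stopped (\<lambda>t \<omega>. cQ t \<omega> + ind_before \<tau>s t \<omega> * q t \<omega> + (1 - ind_before \<tau>s t \<omega>) * Q t \<omega>) \<theta>) t \<omega>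
        - from0 (stopped (\<lambda>t \<omega>. cPnsb t \<omega> + ind_before \<tau>s t \<omega> * Pbad t \<omega> + (1 - ind_before \<tau>s t \<omega>) * Pnsb t \<omega>) \<theta>) t \<omega>
        - h t \<omega>"
    using path_pPbad zero_call AE_space
  proof eventually_elim
    fix \<omega> assume path: "\<forall>s. 0 \<le> s \<and> s \<le> T \<and> s < \<tau>s \<omega> \<longrightarrow> p s \<omega> = Pbad s \<omega>"
      and zc: "ind_before \<tau>s (\<theta> \<omega>) \<omega> * q (\<theta> \<omega>) \<omega> + (1 - ind_before \<tau>s (\<theta> \<omega>) \<omega>) * Q (\<theta> \<omega>) \<omega> = 0"
      and \<omega>: "\<omega> \<in> space M"
    have jp: "ind_before \<tau>s s \<omega> * p s \<omega> = ind_before \<tau>s s \<omega> * Pbad s \<omega>" if "0 \<le> s" "s \<le> T" for s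
      using path that by (auto simp: ind_before_def)
    have th: "0 \<le> \<theta> \<omega>" "\<theta> \<omega> \<le> T" using th_range[OF \<omega>] by auto
    have e1: "ind_before \<tau>s (min t (\<theta> \<omega>)) \<omega> * p (min t (\<theta> \<omega>)) \<omega> = ind_before \<tau>s (min t (\<theta> \<omega>)) \<omega> * Pbad (min t (\<theta> \<omega>)) \<omega>"
      by (rule jp) (use t th in auto)
    have e0: "ind_before \<tau>s (min 0 (\<theta> \<omega>)) \<omega> * p (min 0 (\<theta> \<omega>)) \<omega> = ind_before \<tau>s (min 0 (\<theta> \<omega>)) \<omega> * Pbad (min 0 (\<theta> \<omega>)) \<omega>"
      by (rule jp) (use t th in auto)
    have z: "(1 - ind_before \<theta> t \<omega>) * (ind_before \<tau>s (\<theta> \<omega>) \<omega> * q (\<theta> \<omega>) \<omega> + (1 - ind_before \<tau>s (\<theta> \<omega>) \<omega>) * Q (\<theta> \<omega>) \<omega>) = 0"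
      using zc by simp
    show "PNL t \<omega> =
        from0 (stopped (\<lambda>t \<omega>. cQ t \<omega> + ind_before \<tau>s t \<omega> * q t \<omega> + (1 - ind_before \<tau>s t \<omega>) * Q t \<omega>) \<theta>) t \<omega>
        - from0 (stopped (\<lambda>t \<omega>. cPnsb t \<omega> + ind_before \<tau>s t \<omega> * Pbad t \<omega> + (1 - ind_before \<tau>s t \<omega>) * Pnsb t \<omega>) \<theta>) t \<omega>
        - h t \<omega>"
    proof -
      have "from0 (stopped (\<lambda>t \<omega>. cPnsb t \<omega> + ind_before \<tau>s t \<omega> * p t \<omega> + (1 - ind_before \<tau>s t \<omega>) * Pnsb t \<omega>) \<theta>) t \<omega>
          = from0 (stopped (\<lambda>t \<omega>. cPnsb t \<omega> + ind_before \<tau>s t \<omega> * Pbad t \<omega> + (1 - ind_before \<tau>s t \<omega>) * Pnsb t \<omega>) \<theta>) t \<omega>"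
        unfolding from0_def stopped_def by (simp only: e0 e1)
      then show ?thesis unfolding PNL_def pnl_nsb_def using z by simp
    qed
  qed
qed

end

context nsb
begin

lemma reg_meas: "regular_process M F T X \<Longrightarrow> stopping_time_on M F T \<sigma> \<Longrightarrow> (\<lambda>\<omega>. X (\<sigma> \<omega>) \<omega>) \<in> borel_measurable M"
  using reg_int by blast

lemma reg_prog: "regular_process M F T X \<Longrightarrow> stopping_time_on M F T \<sigma> \<Longrightarrow> t \<in> {0..T} \<Longrightarrow>
   (\<lambda>\<omega>. X (min t (\<sigma> \<omega>)) \<omega>) \<in> borel_measurable (F t)"
  using progressive reg_ad reg_rc by blast

lemma K_prog: "stopping_time_on M F T \<sigma> \<Longrightarrow> t \<in> {0..T} \<Longrightarrow>
   (\<lambda>\<omega>. K (min t (\<sigma> \<omega>)) \<omega>) \<in> borel_measurable (F t)"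
  using progressive[OF _ cad_rc[OF K_props(2)]] K_ad by blast

lemma part3: "\<forall>t\<in>{0..T}. AE \<omega> in M. vaK\<theta> t \<omega> =
        cQ (min t (\<theta> \<omega>)) \<omega> + Q (min t (\<theta> \<omega>)) \<omega> - cexp M F t (\<lambda>\<omega>. cQ (\<theta> \<omega>) \<omega> + Q (\<theta> \<omega>) \<omega>) \<omega>"
proof
  fix t assume t: "t \<in> {0..T}"
  have stm: "stopping_time_on M F T (\<lambda>\<omega>. min t (\<theta> \<omega>))" by (rule st_min_const[OF th_st t])
  have cQr: "regular_process M F T cQ" by (rule cf_reg[OF cQ])
  have iK: "integrable M (\<lambda>\<omega>. K (\<theta> \<omega>) \<omega>)" by (rule K_int[OF th_st])
  have iKm: "integrable M (\<lambda>\<omega>. K (min t (\<theta> \<omega>)) \<omega>)" using K_int[OF stm] by simp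
  have iQ: "integrable M (\<lambda>\<omega>. cQ (\<theta> \<omega>) \<omega> + Q (\<theta> \<omega>) \<omega>)"
    using reg_int[OF cQr th_st] reg_int[OF Q_reg th_st] by simp
  have KmF: "(\<lambda>\<omega>. K (min t (\<theta> \<omega>)) \<omega>) \<in> borel_measurable (F t)" by (rule K_prog[OF th_st t])
  have [measurable]: "(\<lambda>\<omega>. K (\<theta> \<omega>) \<omega>) \<in> borel_measurable M" "(\<lambda>\<omega>. K (min t (\<theta> \<omega>)) \<omega>) \<in> borel_measurable M"
    using iK iKm by auto
  have mT: "(\<lambda>\<omega>. K (min T (\<theta> \<omega>)) \<omega>) \<in> borel_measurable M"
  proof -
    have "(\<lambda>\<omega>. K (min T (\<theta> \<omega>)) \<omega>) \<in> borel_measurable M \<longleftrightarrow> (\<lambda>\<omega>. K (\<theta> \<omega>) \<omega>) \<in> borel_measurable M"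
      by (rule measurable_cong) (use th_range in auto)
    then show ?thesis by simp
  qed
  have e1: "AE \<omega> in M. vaK\<theta> t \<omega> = cexp M F t (\<lambda>\<omega>. K (\<theta> \<omega>) \<omega> - K (min t (\<theta> \<omega>)) \<omega>) \<omega>"
  proof -
    have "AE \<omega> in M. cexp M F t (\<lambda>\<omega>. K (min T (\<theta> \<omega>)) \<omega> - K (min t (\<theta> \<omega>)) \<omega>) \<omega>
        = cexp M F t (\<lambda>\<omega>. K (\<theta> \<omega>) \<omega> - K (min t (\<theta> \<omega>)) \<omega>) \<omega>"
      by (rule ce_cong[OF t]) (use th_range mT in auto)
    then show ?thesis unfolding vaK\<theta>_def va_def stopped_def .
  qed
  have e2: "AE \<omega> in M. cexp M F t (\<lambda>\<omega>. K (\<theta> \<omega>) \<omega> - K (min t (\<theta> \<omega>)) \<omega>) \<omega>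
      = cexp M F t (\<lambda>\<omega>. K (\<theta> \<omega>) \<omega>) \<omega> - cexp M F t (\<lambda>\<omega>. K (min t (\<theta> \<omega>)) \<omega>) \<omega>"
    by (rule ce_diff[OF t iK iKm])
  have e3: "AE \<omega> in M. cexp M F t (\<lambda>\<omega>. K (min t (\<theta> \<omega>)) \<omega>) \<omega> = K (min t (\<theta> \<omega>)) \<omega>"
    by (rule ce_F[OF t iKm KmF])
  have e4: "AE \<omega> in M. cexp M F t (\<lambda>\<omega>. (cQ (\<theta> \<omega>) \<omega> + Q (\<theta> \<omega>) \<omega>) + K (\<theta> \<omega>) \<omega>) \<omega>
      = cexp M F t (\<lambda>\<omega>. cQ (\<theta> \<omega>) \<omega> + Q (\<theta> \<omega>) \<omega>) \<omega> + cexp M F t (\<lambda>\<omega>. K (\<theta> \<omega>) \<omega>) \<omega>"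
    by (rule ce_add[OF t iQ iK])
  have e5: "AE \<omega> in M. cexp M F t (\<lambda>\<omega>. cQ (\<theta> \<omega>) \<omega> + Q (\<theta> \<omega>) \<omega> + K (\<theta> \<omega>) \<omega>) \<omega>
   = cQ (min t (\<theta> \<omega>)) \<omega> + Q (min t (\<theta> \<omega>)) \<omega> + K (min t (\<theta> \<omega>)) \<omega>" by (rule OS1[OF t])
  show "AE \<omega> in M. vaK\<theta> t \<omega> =
        cQ (min t (\<theta> \<omega>)) \<omega> + Q (min t (\<theta> \<omega>)) \<omega> - cexp M F t (\<lambda>\<omega>. cQ (\<theta> \<omega>) \<omega> + Q (\<theta> \<omega>) \<omega>) \<omega>"
    using e1 e2 e3 e4 e5 by eventually_elim simp
qed

end

lemma jmix_int: fixes f g j :: "'a \<Rightarrow> real"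
  assumes f: "integrable M f" and g: "integrable M g" and j: "j \<in> borel_measurable M"
    and j01: "\<And>\<omega>. 0 \<le> j \<omega> \<and> j \<omega> \<le> 1"
  shows "integrable M (\<lambda>\<omega>. j \<omega> * f \<omega> + (1 - j \<omega>) * g \<omega>)"
proof (rule Bochner_Integration.integrable_bound[where f="\<lambda>\<omega>. \<bar>f \<omega>\<bar> + \<bar>g \<omega>\<bar>"])
  show "integrable M (\<lambda>\<omega>. \<bar>f \<omega>\<bar> + \<bar>g \<omega>\<bar>)" using f g by simp
  have [measurable]: "f \<in> borel_measurable M" "g \<in> borel_measurable M" using f g by auto
  show "(\<lambda>\<omega>. j \<omega> * f \<omega> + (1 - j \<omega>) * g \<omega>) \<in> borel_measurable M" using j by measurable
  show "AE \<omega> in M. norm (j \<omega> * f \<omega> + (1 - j \<omega>) * g \<omega>) \<le> norm (\<bar>f \<omega>\<bar> + \<bar>g \<omega>\<bar>)"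
  proof (rule AE_I2)
    fix \<omega>
    have a0: "\<bar>j \<omega>\<bar> \<le> 1" "\<bar>1 - j \<omega>\<bar> \<le> 1" using j01[of \<omega>] by auto
    have a: "\<bar>j \<omega> * f \<omega>\<bar> \<le> \<bar>f \<omega>\<bar>" unfolding abs_mult using mult_right_mono[OF a0(1), of "\<bar>f \<omega>\<bar>"] by simp
    have b: "\<bar>(1 - j \<omega>) * g \<omega>\<bar> \<le> \<bar>g \<omega>\<bar>" unfolding abs_mult using mult_right_mono[OF a0(2), of "\<bar>g \<omega>\<bar>"] by simp
    show "norm (j \<omega> * f \<omega> + (1 - j \<omega>) * g \<omega>) \<le> norm (\<bar>f \<omega>\<bar> + \<bar>g \<omega>\<bar>)" using a b by simp
  qed
qed

lemma jmul_int: fixes f j :: "'a \<Rightarrow> real"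
  assumes f: "integrable M f" and j: "j \<in> borel_measurable M" and j01: "\<And>\<omega>. 0 \<le> j \<omega> \<and> j \<omega> \<le> 1"
  shows "integrable M (\<lambda>\<omega>. j \<omega> * f \<omega>)"
  using jmix_int[OF f integrable_zero j j01] by simp

lemma ib01: "0 \<le> ind_before \<sigma> s \<omega> \<and> ind_before \<sigma> s \<omega> \<le> 1"
  unfolding ind_before_def by simp

context nsb
begin

lemma J_ad: "s \<in> {0..T} \<Longrightarrow> (\<lambda>\<omega>. ind_before \<tau>s s \<omega>) \<in> borel_measurable (F s)"
proof -
  assume s: "s \<in> {0..T}"
  have [measurable]: "Measurable.pred (F s) (\<lambda>\<omega>. \<tau>s \<omega> \<le> s)" by (rule pred_le_F[OF s \<tau>s])
  have "(\<lambda>\<omega>. if \<not> \<tau>s \<omega> \<le> s then 1 else (0::real)) \<in> borel_measurable (F s)" by measurable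
  then show ?thesis unfolding ind_before_def by (simp add: not_le)
qed

lemma J_rc: "((\<lambda>u. ind_before \<tau>s u \<omega>) \<longlongrightarrow> ind_before \<tau>s s \<omega>) (at_right s)"
proof (cases "s < \<tau>s \<omega>")
  case True
  have ev: "eventually (\<lambda>u. u \<in> {s<..<\<tau>s \<omega>}) (at_right s)" by (rule eventually_at_right_real[OF True])
  have "eventually (\<lambda>u. (\<lambda>_. ind_before \<tau>s s \<omega>) u = ind_before \<tau>s u \<omega>) (at_right s)"
    using ev by eventually_elim (use True in \<open>auto simp: ind_before_def\<close>)
  then show ?thesis by (rule Lim_transform_eventually[OF tendsto_const])
next
  case False
  have ev: "eventually (\<lambda>u. s < u) (at_right s)" by (rule eventually_at_right_less)
  have "eventually (\<lambda>u. (\<lambda>_. ind_before \<tau>s s \<omega>) u = ind_before \<tau>s u \<omega>) (at_right s)"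
    using ev by eventually_elim (use False in \<open>auto simp: ind_before_def\<close>)
  then show ?thesis by (rule Lim_transform_eventually[OF tendsto_const])
qed

lemma comb_prog:
  fixes X Y Z :: "real \<Rightarrow> 'a \<Rightarrow> real"
  assumes aX: "\<forall>s\<in>{0..T}. X s \<in> borel_measurable (F s)" and rX: "\<forall>\<omega>\<in>space M. \<forall>s\<in>{0..<T}. ((\<lambda>u. X u \<omega>) \<longlongrightarrow> X s \<omega>) (at_right s)"
    and aY: "\<forall>s\<in>{0..T}. Y s \<in> borel_measurable (F s)" and rY: "\<forall>\<omega>\<in>space M. \<forall>s\<in>{0..<T}. ((\<lambda>u. Y u \<omega>) \<longlongrightarrow> Y s \<omega>) (at_right s)"
    and aZ: "\<forall>s\<in>{0..T}. Z s \<in> borel_measurable (F s)" and rZ: "\<forall>\<omega>\<in>space M. \<forall>s\<in>{0..<T}. ((\<lambda>u. Z u \<omega>) \<longlongrightarrow> Z s \<omega>) (at_right s)"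
    and st: "stopping_time_on M F T \<sigma>" and t: "t \<in> {0..T}"
  shows "(\<lambda>\<omega>. X (min t (\<sigma> \<omega>)) \<omega> + ind_before \<tau>s (min t (\<sigma> \<omega>)) \<omega> * Y (min t (\<sigma> \<omega>)) \<omega>
           + (1 - ind_before \<tau>s (min t (\<sigma> \<omega>)) \<omega>) * Z (min t (\<sigma> \<omega>)) \<omega>) \<in> borel_measurable (F t)"
proof -
  let ?W = "\<lambda>s \<omega>. X s \<omega> + ind_before \<tau>s s \<omega> * Y s \<omega> + (1 - ind_before \<tau>s s \<omega>) * Z s \<omega>"
  have aW: "\<forall>s\<in>{0..T}. ?W s \<in> borel_measurable (F s)"
  proof
    fix s assume s: "s \<in> {0..T}"
    have [measurable]: "X s \<in> borel_measurable (F s)" "Y s \<in> borel_measurable (F s)" "Z s \<in> borel_measurable (F s)"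
      "(\<lambda>\<omega>. ind_before \<tau>s s \<omega>) \<in> borel_measurable (F s)" using aX aY aZ J_ad s by auto
    show "?W s \<in> borel_measurable (F s)" by measurable
  qed
  have rW: "\<forall>\<omega>\<in>space M. \<forall>s\<in>{0..<T}. ((\<lambda>u. ?W u \<omega>) \<longlongrightarrow> ?W s \<omega>) (at_right s)"
  proof (intro ballI)
    fix \<omega> s assume "\<omega> \<in> space M" "s \<in> {0..<T}"
    then show "((\<lambda>u. ?W u \<omega>) \<longlongrightarrow> ?W s \<omega>) (at_right s)"
      using rX rY rZ J_rc by (intro tendsto_add tendsto_mult tendsto_diff tendsto_const) auto
  qed
  show ?thesis using progressive[OF aW rW st t] by simp
qed

lemma comb_int:
  fixes X Y Z :: "real \<Rightarrow> 'a \<Rightarrow> real"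
  assumes "integrable M (\<lambda>\<omega>. X (\<sigma> \<omega>) \<omega>)" "integrable M (\<lambda>\<omega>. Y (\<sigma> \<omega>) \<omega>)" "integrable M (\<lambda>\<omega>. Z (\<sigma> \<omega>) \<omega>)"
    and st: "stopping_time_on M F T \<sigma>"
  shows "integrable M (\<lambda>\<omega>. X (\<sigma> \<omega>) \<omega> + ind_before \<tau>s (\<sigma> \<omega>) \<omega> * Y (\<sigma> \<omega>) \<omega>
           + (1 - ind_before \<tau>s (\<sigma> \<omega>) \<omega>) * Z (\<sigma> \<omega>) \<omega>)"
proof -
  have [measurable]: "\<sigma> \<in> borel_measurable M" "\<tau>s \<in> borel_measurable M" using st_meas[OF st] st_meas[OF \<tau>s] by auto
  have j: "(\<lambda>\<omega>. ind_before \<tau>s (\<sigma> \<omega>) \<omega>) \<in> borel_measurable M" unfolding ind_before_def by measurable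
  have "integrable M (\<lambda>\<omega>. ind_before \<tau>s (\<sigma> \<omega>) \<omega> * Y (\<sigma> \<omega>) \<omega> + (1 - ind_before \<tau>s (\<sigma> \<omega>) \<omega>) * Z (\<sigma> \<omega>) \<omega>)"
    by (rule jmix_int[OF assms(2,3) j ib01])
  then have "integrable M (\<lambda>\<omega>. X (\<sigma> \<omega>) \<omega> + (ind_before \<tau>s (\<sigma> \<omega>) \<omega> * Y (\<sigma> \<omega>) \<omega> + (1 - ind_before \<tau>s (\<sigma> \<omega>) \<omega>) * Z (\<sigma> \<omega>) \<omega>))"
    using assms(1) by (rule Bochner_Integration.integrable_add[rotated])
  then show ?thesis by (simp add: add.assoc)
qed

lemma cPnsb_prog: "stopping_time_on M F T \<sigma> \<Longrightarrow> t \<in> {0..T} \<Longrightarrow>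
   (\<lambda>\<omega>. cPnsb (min t (\<sigma> \<omega>)) \<omega>) \<in> borel_measurable (F t)"
  using progressive[OF _ cPnsb_rc] cPnsb_ad by blast

end

context nsb
begin

lemma atom_meas:
  assumes st: "stopping_time_on M F T \<sigma>"
  shows "(\<lambda>\<omega>. cQ (\<sigma> \<omega>) \<omega>) \<in> borel_measurable M" "(\<lambda>\<omega>. Q (\<sigma> \<omega>) \<omega>) \<in> borel_measurable M"
    "(\<lambda>\<omega>. q (\<sigma> \<omega>) \<omega>) \<in> borel_measurable M" "(\<lambda>\<omega>. p (\<sigma> \<omega>) \<omega>) \<in> borel_measurable M"
    "(\<lambda>\<omega>. Pbad (\<sigma> \<omega>) \<omega>) \<in> borel_measurable M" "(\<lambda>\<omega>. Pnsb (\<sigma> \<omega>) \<omega>) \<in> borel_measurable M"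
    "(\<lambda>\<omega>. cPnsb (\<sigma> \<omega>) \<omega>) \<in> borel_measurable M" "\<sigma> \<in> borel_measurable M"
  using reg_meas[OF cf_reg[OF cQ] st] reg_meas[OF Q_reg st] reg_meas[OF q_reg st] reg_meas[OF p_reg st]
    reg_meas[OF Pbad_reg st] reg_meas[OF Pnsb_reg st] cPnsb_int[OF st] st_meas[OF st] by auto

lemma h_meas: "s \<in> {0..T} \<Longrightarrow> h s \<in> borel_measurable M"
  using h_mart meas_M unfolding martingale_on_def adapted_def by blast

lemma pnl_meas: assumes s: "s \<in> {0..T}" shows "PNL s \<in> borel_measurable M"
proof -
  have s1: "stopping_time_on M F T (\<lambda>\<omega>. min s (\<theta> \<omega>))" by (rule st_min_const[OF th_st s])
  have s0: "stopping_time_on M F T (\<lambda>\<omega>. min 0 (\<theta> \<omega>))" by (rule st_min_const[OF th_st]) (use T_pos in simp)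
  note [measurable] = atom_meas[OF s1] atom_meas[OF s0] atom_meas[OF th_st] h_meas[OF s] st_meas[OF \<tau>s]
  show ?thesis unfolding PNL_def pnl_nsb_def from0_def stopped_def ind_before_def by measurable
qed

lemma part2: "\<forall>t\<in>{0..T}. AE \<omega> in M. HVA t \<omega> =
        stopped (\<lambda>t \<omega>. ind_before \<tau>s t \<omega> * (q t \<omega> - Q t \<omega> - (Pbad t \<omega> - Pnsb t \<omega>))) \<theta> t \<omega>
        + D t \<omega> + vaK\<theta> t \<omega>"
proof
  fix t assume t: "t \<in> {0..T}"
  have stm: "stopping_time_on M F T (\<lambda>\<omega>. min t (\<theta> \<omega>))" by (rule st_min_const[OF th_st t])
  have cQr: "regular_process M F T cQ" by (rule cf_reg[OF cQ])
  note [measurable] = atom_meas[OF th_st] st_meas[OF \<tau>s]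
  define Jt where "Jt = (\<lambda>\<omega>. ind_before \<tau>s (\<theta> \<omega>) \<omega>)"
  have Jm[measurable]: "Jt \<in> borel_measurable M" unfolding Jt_def ind_before_def by measurable
  have J01: "\<And>\<omega>. 0 \<le> Jt \<omega> \<and> Jt \<omega> \<le> 1" unfolding Jt_def by (rule ib01)
  define a1 where "a1 = (\<lambda>\<omega>. cQ (\<theta> \<omega>) \<omega>)"
  define a2 where "a2 = (\<lambda>\<omega>. Jt \<omega> * Q (\<theta> \<omega>) \<omega>)"
  define a3 where "a3 = (\<lambda>\<omega>. Jt \<omega> * (Pnsb (\<theta> \<omega>) \<omega> - Pbad (\<theta> \<omega>) \<omega>))"
  define a4 where "a4 = (\<lambda>\<omega>. cPnsb (\<theta> \<omega>) \<omega> + Pnsb (\<theta> \<omega>) \<omega>)"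
  define a5 where "a5 = (\<lambda>\<omega>. Q (\<theta> \<omega>) \<omega>)"
  define Am where "Am = (\<lambda>\<omega>. cQ (min t (\<theta> \<omega>)) \<omega> + ind_before \<tau>s (min t (\<theta> \<omega>)) \<omega> * q (min t (\<theta> \<omega>)) \<omega>
           + (1 - ind_before \<tau>s (min t (\<theta> \<omega>)) \<omega>) * Q (min t (\<theta> \<omega>)) \<omega>)"
  define Bm where "Bm = (\<lambda>\<omega>. cPnsb (min t (\<theta> \<omega>)) \<omega> + ind_before \<tau>s (min t (\<theta> \<omega>)) \<omega> * Pbad (min t (\<theta> \<omega>)) \<omega>
           + (1 - ind_before \<tau>s (min t (\<theta> \<omega>)) \<omega>) * Pnsb (min t (\<theta> \<omega>)) \<omega>)"
  define Cm where "Cm = (\<lambda>\<omega>. - Am \<omega> + Bm \<omega> + h t \<omega>)"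
  have iQt: "integrable M (\<lambda>\<omega>. Q (\<theta> \<omega>) \<omega>)" by (rule reg_int[OF Q_reg th_st])
  have i1: "integrable M a1" unfolding a1_def by (rule reg_int[OF cQr th_st])
  have i2: "integrable M a2" unfolding a2_def by (rule jmul_int[OF iQt Jm J01])
  have i3: "integrable M a3" unfolding a3_def
    by (rule jmul_int[OF _ Jm J01]) (use reg_int[OF Pnsb_reg th_st] reg_int[OF Pbad_reg th_st] in simp)
  have i4: "integrable M a4" unfolding a4_def by (rule X2_int[OF th_st])
  have i5: "integrable M a5" unfolding a5_def by (rule iQt)
  have ihT: "integrable M (h T)" and iht: "integrable M (h t)" using h_mart t T_in unfolding martingale_on_def by blast+
  have iAm: "integrable M Am" unfolding Am_def
    using comb_int[OF _ _ _ stm, of cQ q Q] reg_int[OF cQr stm] reg_int[OF q_reg stm] reg_int[OF Q_reg stm] by simp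
  have iBm: "integrable M Bm" unfolding Bm_def
    using comb_int[OF _ _ _ stm, of cPnsb Pbad Pnsb] cPnsb_int[OF stm] reg_int[OF Pbad_reg stm] reg_int[OF Pnsb_reg stm] by simp
  have iCm: "integrable M Cm" unfolding Cm_def using iAm iBm iht by simp
  have AmF[measurable]: "Am \<in> borel_measurable (F t)" unfolding Am_def
    by (rule comb_prog[OF reg_ad[OF cQr] reg_rc[OF cQr] reg_ad[OF q_reg] reg_rc[OF q_reg] reg_ad[OF Q_reg] reg_rc[OF Q_reg] th_st t])
  have BmF[measurable]: "Bm \<in> borel_measurable (F t)" unfolding Bm_def
    by (rule comb_prog[OF _ cPnsb_rc reg_ad[OF Pbad_reg] reg_rc[OF Pbad_reg] reg_ad[OF Pnsb_reg] reg_rc[OF Pnsb_reg] th_st t])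
       (use cPnsb_ad in blast)
  have htF[measurable]: "h t \<in> borel_measurable (F t)" using h_mart t unfolding martingale_on_def adapted_def by blast
  have CmF: "Cm \<in> borel_measurable (F t)" unfolding Cm_def by measurable
  have [measurable]: "a1 \<in> borel_measurable M" "a2 \<in> borel_measurable M" "a3 \<in> borel_measurable M"
    "a4 \<in> borel_measurable M" "a5 \<in> borel_measurable M" "h T \<in> borel_measurable M" "Cm \<in> borel_measurable M"
    using i1 i2 i3 i4 i5 ihT iCm by auto
  have [measurable]: "PNL T \<in> borel_measurable M" "PNL t \<in> borel_measurable M" using pnl_meas t T_in by auto
  have S1: "AE \<omega> in M. PNL T \<omega> - PNL t \<omega> = a1 \<omega> - a4 \<omega> + a3 \<omega> - h T \<omega> + Cm \<omega>"
    using part1 T_in t zero_call AE_space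
  proof -
    have pT: "AE \<omega> in M. PNL T \<omega> =
        from0 (stopped (\<lambda>t \<omega>. cQ t \<omega> + ind_before \<tau>s t \<omega> * q t \<omega> + (1 - ind_before \<tau>s t \<omega>) * Q t \<omega>) \<theta>) T \<omega>
        - from0 (stopped (\<lambda>t \<omega>. cPnsb t \<omega> + ind_before \<tau>s t \<omega> * Pbad t \<omega> + (1 - ind_before \<tau>s t \<omega>) * Pnsb t \<omega>) \<theta>) T \<omega>
        - h T \<omega>" using part1 T_in by blast
    have pt: "AE \<omega> in M. PNL t \<omega> =
        from0 (stopped (\<lambda>t \<omega>. cQ t \<omega> + ind_before \<tau>s t \<omega> * q t \<omega> + (1 - ind_before \<tau>s t \<omega>) * Q t \<omega>) \<theta>) t \<omega>
        - from0 (stopped (\<lambda>t \<omega>. cPnsb t \<omega> + ind_before \<tau>s t \<omega> * Pbad t \<omega> + (1 - ind_before \<tau>s t \<omega>) * Pnsb t \<omega>) \<theta>) t \<omega>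
        - h t \<omega>" using part1 t by blast
    show ?thesis using pT pt zero_call AE_space
    proof eventually_elim
      fix \<omega> assume pT: "PNL T \<omega> =
        from0 (stopped (\<lambda>t \<omega>. cQ t \<omega> + ind_before \<tau>s t \<omega> * q t \<omega> + (1 - ind_before \<tau>s t \<omega>) * Q t \<omega>) \<theta>) T \<omega>
        - from0 (stopped (\<lambda>t \<omega>. cPnsb t \<omega> + ind_before \<tau>s t \<omega> * Pbad t \<omega> + (1 - ind_before \<tau>s t \<omega>) * Pnsb t \<omega>) \<theta>) T \<omega>
        - h T \<omega>" and pt: "PNL t \<omega> =
        from0 (stopped (\<lambda>t \<omega>. cQ t \<omega> + ind_before \<tau>s t \<omega> * q t \<omega> + (1 - ind_before \<tau>s t \<omega>) * Q t \<omega>) \<theta>) t \<omega>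
        - from0 (stopped (\<lambda>t \<omega>. cPnsb t \<omega> + ind_before \<tau>s t \<omega> * Pbad t \<omega> + (1 - ind_before \<tau>s t \<omega>) * Pnsb t \<omega>) \<theta>) t \<omega>
        - h t \<omega>"
        and zc: "ind_before \<tau>s (\<theta> \<omega>) \<omega> * q (\<theta> \<omega>) \<omega> + (1 - ind_before \<tau>s (\<theta> \<omega>) \<omega>) * Q (\<theta> \<omega>) \<omega> = 0"
        and \<omega>: "\<omega> \<in> space M"
      have mT: "min T (\<theta> \<omega>) = \<theta> \<omega>" using th_range[OF \<omega>] by simp
      have aT: "cQ (\<theta> \<omega>) \<omega> + ind_before \<tau>s (\<theta> \<omega>) \<omega> * q (\<theta> \<omega>) \<omega> + (1 - ind_before \<tau>s (\<theta> \<omega>) \<omega>) * Q (\<theta> \<omega>) \<omega> = a1 \<omega>"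
        using zc unfolding a1_def by simp
      have bT: "cPnsb (\<theta> \<omega>) \<omega> + ind_before \<tau>s (\<theta> \<omega>) \<omega> * Pbad (\<theta> \<omega>) \<omega> + (1 - ind_before \<tau>s (\<theta> \<omega>) \<omega>) * Pnsb (\<theta> \<omega>) \<omega> = a4 \<omega> - a3 \<omega>"
        unfolding a4_def a3_def Jt_def by (simp add: algebra_simps)
      have pT': "PNL T \<omega> = a1 \<omega> - (cQ (min 0 (\<theta> \<omega>)) \<omega> + ind_before \<tau>s (min 0 (\<theta> \<omega>)) \<omega> * q (min 0 (\<theta> \<omega>)) \<omega> + (1 - ind_before \<tau>s (min 0 (\<theta> \<omega>)) \<omega>) * Q (min 0 (\<theta> \<omega>)) \<omega>)
         - ((a4 \<omega> - a3 \<omega>) - (cPnsb (min 0 (\<theta> \<omega>)) \<omega> + ind_before \<tau>s (min 0 (\<theta> \<omega>)) \<omega> * Pbad (min 0 (\<theta> \<omega>)) \<omega> + (1 - ind_before \<tau>s (min 0 (\<theta> \<omega>)) \<omega>) * Pnsb (min 0 (\<theta> \<omega>)) \<omega>)) - h T \<omega>"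
        using pT unfolding from0_def stopped_def mT aT bT .
      have pt': "PNL t \<omega> = Am \<omega> - (cQ (min 0 (\<theta> \<omega>)) \<omega> + ind_before \<tau>s (min 0 (\<theta> \<omega>)) \<omega> * q (min 0 (\<theta> \<omega>)) \<omega> + (1 - ind_before \<tau>s (min 0 (\<theta> \<omega>)) \<omega>) * Q (min 0 (\<theta> \<omega>)) \<omega>)
         - (Bm \<omega> - (cPnsb (min 0 (\<theta> \<omega>)) \<omega> + ind_before \<tau>s (min 0 (\<theta> \<omega>)) \<omega> * Pbad (min 0 (\<theta> \<omega>)) \<omega> + (1 - ind_before \<tau>s (min 0 (\<theta> \<omega>)) \<omega>) * Pnsb (min 0 (\<theta> \<omega>)) \<omega>)) - h t \<omega>"
        using pt unfolding from0_def stopped_def Am_def Bm_def .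
      show "PNL T \<omega> - PNL t \<omega> = a1 \<omega> - a4 \<omega> + a3 \<omega> - h T \<omega> + Cm \<omega>"
        unfolding Cm_def using pT' pt' by linarith
    qed
  qed
  have S2: "AE \<omega> in M. cexp M F t (\<lambda>\<omega>. PNL T \<omega> - PNL t \<omega>) \<omega> = cexp M F t (\<lambda>\<omega>. a1 \<omega> - a4 \<omega> + a3 \<omega> - h T \<omega> + Cm \<omega>) \<omega>"
    by (rule ce_cong[OF t S1]) measurable
  have c1: "AE \<omega> in M. cexp M F t (\<lambda>\<omega>. a1 \<omega> - a4 \<omega> + a3 \<omega> - h T \<omega> + Cm \<omega>) \<omega>
      = cexp M F t (\<lambda>\<omega>. a1 \<omega> - a4 \<omega> + a3 \<omega> - h T \<omega>) \<omega> + cexp M F t Cm \<omega>"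
    by (rule ce_add[OF t _ iCm]) (use i1 i3 i4 ihT in simp)
  have c2: "AE \<omega> in M. cexp M F t (\<lambda>\<omega>. a1 \<omega> - a4 \<omega> + a3 \<omega> - h T \<omega>) \<omega>
      = cexp M F t (\<lambda>\<omega>. a1 \<omega> - a4 \<omega> + a3 \<omega>) \<omega> - cexp M F t (h T) \<omega>"
    by (rule ce_diff[OF t _ ihT]) (use i1 i3 i4 in simp)
  have c3: "AE \<omega> in M. cexp M F t (\<lambda>\<omega>. a1 \<omega> - a4 \<omega> + a3 \<omega>) \<omega>
      = cexp M F t (\<lambda>\<omega>. a1 \<omega> - a4 \<omega>) \<omega> + cexp M F t a3 \<omega>"
    by (rule ce_add[OF t _ i3]) (use i1 i4 in simp)
  have c4: "AE \<omega> in M. cexp M F t (\<lambda>\<omega>. a1 \<omega> - a4 \<omega>) \<omega> = cexp M F t a1 \<omega> - cexp M F t a4 \<omega>"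
    by (rule ce_diff[OF t i1 i4])
  have c5: "AE \<omega> in M. cexp M F t Cm \<omega> = Cm \<omega>" by (rule ce_F[OF t iCm CmF])
  have c6: "AE \<omega> in M. cexp M F t (h T) \<omega> = h t \<omega>" using h_mart t T_pos unfolding martingale_on_def by auto
  have c7: "AE \<omega> in M. cexp M F t a4 \<omega> = cPnsb (min t (\<theta> \<omega>)) \<omega> + Pnsb (min t (\<theta> \<omega>)) \<omega>"
    unfolding a4_def by (rule OS2[OF t])
  have d1: "D t = cexp M F t (\<lambda>\<omega>. a2 \<omega> - a3 \<omega>)"
  proof -
    have "(\<lambda>\<omega>. ind_before \<tau>s (\<theta> \<omega>) \<omega> * (Q (\<theta> \<omega>) \<omega> - (Pnsb (\<theta> \<omega>) \<omega> - Pbad (\<theta> \<omega>) \<omega>))) = (\<lambda>\<omega>. a2 \<omega> - a3 \<omega>)"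
      unfolding a2_def a3_def Jt_def by (simp add: algebra_simps)
    then show ?thesis unfolding D_def by simp
  qed
  have d2: "AE \<omega> in M. cexp M F t (\<lambda>\<omega>. a2 \<omega> - a3 \<omega>) \<omega> = cexp M F t a2 \<omega> - cexp M F t a3 \<omega>"
    by (rule ce_diff[OF t i2 i3])
  have v1: "AE \<omega> in M. vaK\<theta> t \<omega> = cQ (min t (\<theta> \<omega>)) \<omega> + Q (min t (\<theta> \<omega>)) \<omega> - cexp M F t (\<lambda>\<omega>. a1 \<omega> + a5 \<omega>) \<omega>"
    unfolding a1_def a5_def using part3 t by blast
  have v2: "AE \<omega> in M. cexp M F t (\<lambda>\<omega>. a1 \<omega> + a5 \<omega>) \<omega> = cexp M F t a1 \<omega> + cexp M F t a5 \<omega>"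
    by (rule ce_add[OF t i1 i5])
  have a52: "AE \<omega> in M. a5 \<omega> = a2 \<omega>"
    using zero_call
  proof eventually_elim
    fix \<omega> assume zc: "ind_before \<tau>s (\<theta> \<omega>) \<omega> * q (\<theta> \<omega>) \<omega> + (1 - ind_before \<tau>s (\<theta> \<omega>) \<omega>) * Q (\<theta> \<omega>) \<omega> = 0"
    show "a5 \<omega> = a2 \<omega>" using zc unfolding a5_def a2_def Jt_def by (auto simp: ind_before_def split: if_splits)
  qed
  have v3: "AE \<omega> in M. cexp M F t a5 \<omega> = cexp M F t a2 \<omega>" by (rule ce_cong[OF t a52]) measurable
  have idt: "cPnsb (min t (\<theta> \<omega>)) \<omega> + Pnsb (min t (\<theta> \<omega>)) \<omega> + Am \<omega> - Bm \<omega>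
     = ind_before \<tau>s (min t (\<theta> \<omega>)) \<omega> * (q (min t (\<theta> \<omega>)) \<omega> - Q (min t (\<theta> \<omega>)) \<omega> - (Pbad (min t (\<theta> \<omega>)) \<omega> - Pnsb (min t (\<theta> \<omega>)) \<omega>))
       + cQ (min t (\<theta> \<omega>)) \<omega> + Q (min t (\<theta> \<omega>)) \<omega>" for \<omega>
    unfolding Am_def Bm_def by (simp add: algebra_simps)
  show "AE \<omega> in M. HVA t \<omega> =
        stopped (\<lambda>t \<omega>. ind_before \<tau>s t \<omega> * (q t \<omega> - Q t \<omega> - (Pbad t \<omega> - Pnsb t \<omega>))) \<theta> t \<omega>
        + D t \<omega> + vaK\<theta> t \<omega>"
    using S2 c1 c2 c3 c4 c5 c6 c7 d2 v1 v2 v3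
  proof eventually_elim
    case (elim \<omega>)
    have "HVA t \<omega> = - cexp M F t (\<lambda>\<omega>. PNL T \<omega> - PNL t \<omega>) \<omega>" unfolding HVA_def va_def ..
    moreover have "Cm \<omega> = - Am \<omega> + Bm \<omega> + h t \<omega>" unfolding Cm_def ..
    ultimately show ?case unfolding stopped_def d1 using elim idt[of \<omega>] by linarith
  qed
qed

end

context nsb
begin

lemma part5: "\<forall>t\<in>{0..T}. AE \<omega> in M. - PNL t \<omega> + (HVA t \<omega> - HVA 0 \<omega>) =
        - from0 (stopped (\<lambda>t \<omega>. cQ t \<omega> + Q t \<omega>) \<theta>) t \<omega>
        + from0 (stopped (\<lambda>t \<omega>. cPnsb t \<omega> + Pnsb t \<omega>) \<theta>) t \<omega>
        + h t \<omega> + from0 D t \<omega> + from0 vaK\<theta> t \<omega>"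
proof
  fix t assume t: "t \<in> {0..T}"
  have t0: "(0::real) \<in> {0..T}" using T_pos by simp
  have p1: "AE \<omega> in M. PNL t \<omega> =
        from0 (stopped (\<lambda>t \<omega>. cQ t \<omega> + ind_before \<tau>s t \<omega> * q t \<omega> + (1 - ind_before \<tau>s t \<omega>) * Q t \<omega>) \<theta>) t \<omega>
        - from0 (stopped (\<lambda>t \<omega>. cPnsb t \<omega> + ind_before \<tau>s t \<omega> * Pbad t \<omega> + (1 - ind_before \<tau>s t \<omega>) * Pnsb t \<omega>) \<theta>) t \<omega>
        - h t \<omega>" using part1 t by blast
  have p2: "AE \<omega> in M. HVA t \<omega> =
        stopped (\<lambda>t \<omega>. ind_before \<tau>s t \<omega> * (q t \<omega> - Q t \<omega> - (Pbad t \<omega> - Pnsb t \<omega>))) \<theta> t \<omega>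
        + D t \<omega> + vaK\<theta> t \<omega>" using part2 t by blast
  have p3: "AE \<omega> in M. HVA 0 \<omega> =
        stopped (\<lambda>t \<omega>. ind_before \<tau>s t \<omega> * (q t \<omega> - Q t \<omega> - (Pbad t \<omega> - Pnsb t \<omega>))) \<theta> 0 \<omega>
        + D 0 \<omega> + vaK\<theta> 0 \<omega>" using part2 t0 by blast
  show "AE \<omega> in M. - PNL t \<omega> + (HVA t \<omega> - HVA 0 \<omega>) =
        - from0 (stopped (\<lambda>t \<omega>. cQ t \<omega> + Q t \<omega>) \<theta>) t \<omega>
        + from0 (stopped (\<lambda>t \<omega>. cPnsb t \<omega> + Pnsb t \<omega>) \<theta>) t \<omega>
        + h t \<omega> + from0 D t \<omega> + from0 vaK\<theta> t \<omega>"
    using p1 p2 p3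
  proof eventually_elim
    case (elim \<omega>)
    have idm: "- (cQ s \<omega> + ind_before \<tau>s s \<omega> * q s \<omega> + (1 - ind_before \<tau>s s \<omega>) * Q s \<omega>)
       + (cPnsb s \<omega> + ind_before \<tau>s s \<omega> * Pbad s \<omega> + (1 - ind_before \<tau>s s \<omega>) * Pnsb s \<omega>)
       + ind_before \<tau>s s \<omega> * (q s \<omega> - Q s \<omega> - (Pbad s \<omega> - Pnsb s \<omega>))
       = - (cQ s \<omega> + Q s \<omega>) + (cPnsb s \<omega> + Pnsb s \<omega>)" for s
      by (simp add: algebra_simps)
    show ?case using elim idm[of "min t (\<theta> \<omega>)"] idm[of "min 0 (\<theta> \<omega>)"]
      unfolding from0_def stopped_def by linarith
  qed
qed

lemma part4: "AE \<omega> in M. HVA 0 \<omega> =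
        q 0 \<omega> - cexp M F 0 (\<lambda>\<omega>. cQ (\<theta> \<omega>) \<omega>) \<omega> - (p 0 \<omega> - Pnsb 0 \<omega>)
        - cexp M F 0 (\<lambda>\<omega>. ind_before \<tau>s (\<theta> \<omega>) \<omega> * (Pnsb (\<theta> \<omega>) \<omega> - p (\<theta> \<omega>) \<omega>)) \<omega>"
proof -
  have t: "(0::real) \<in> {0..T}" using T_pos by simp
  have cQr: "regular_process M F T cQ" by (rule cf_reg[OF cQ])
  note [measurable] = atom_meas[OF th_st] st_meas[OF \<tau>s]
  define Jt where "Jt = (\<lambda>\<omega>. ind_before \<tau>s (\<theta> \<omega>) \<omega>)"
  have Jm[measurable]: "Jt \<in> borel_measurable M" unfolding Jt_def ind_before_def by measurable
  have J01: "\<And>\<omega>. 0 \<le> Jt \<omega> \<and> Jt \<omega> \<le> 1" unfolding Jt_def by (rule ib01)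
  define a1 where "a1 = (\<lambda>\<omega>. cQ (\<theta> \<omega>) \<omega>)"
  define a2 where "a2 = (\<lambda>\<omega>. Jt \<omega> * Q (\<theta> \<omega>) \<omega>)"
  define a3 where "a3 = (\<lambda>\<omega>. Jt \<omega> * (Pnsb (\<theta> \<omega>) \<omega> - Pbad (\<theta> \<omega>) \<omega>))"
  define a5 where "a5 = (\<lambda>\<omega>. Q (\<theta> \<omega>) \<omega>)"
  have iQt: "integrable M (\<lambda>\<omega>. Q (\<theta> \<omega>) \<omega>)" by (rule reg_int[OF Q_reg th_st])
  have i1: "integrable M a1" unfolding a1_def by (rule reg_int[OF cQr th_st])
  have i2: "integrable M a2" unfolding a2_def by (rule jmul_int[OF iQt Jm J01])
  have i3: "integrable M a3" unfolding a3_def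
    by (rule jmul_int[OF _ Jm J01]) (use reg_int[OF Pnsb_reg th_st] reg_int[OF Pbad_reg th_st] in simp)
  have i5: "integrable M a5" unfolding a5_def by (rule iQt)
  have [measurable]: "a1 \<in> borel_measurable M" "a2 \<in> borel_measurable M" "a3 \<in> borel_measurable M"
    "a5 \<in> borel_measurable M"
    using i1 i2 i3 i5 by auto
  have h2: "AE \<omega> in M. HVA 0 \<omega> =
        stopped (\<lambda>t \<omega>. ind_before \<tau>s t \<omega> * (q t \<omega> - Q t \<omega> - (Pbad t \<omega> - Pnsb t \<omega>))) \<theta> 0 \<omega>
        + D 0 \<omega> + vaK\<theta> 0 \<omega>" using part2 t by blast
  have d1: "D 0 = cexp M F 0 (\<lambda>\<omega>. a2 \<omega> - a3 \<omega>)"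
  proof -
    have "(\<lambda>\<omega>. ind_before \<tau>s (\<theta> \<omega>) \<omega> * (Q (\<theta> \<omega>) \<omega> - (Pnsb (\<theta> \<omega>) \<omega> - Pbad (\<theta> \<omega>) \<omega>))) = (\<lambda>\<omega>. a2 \<omega> - a3 \<omega>)"
      unfolding a2_def a3_def Jt_def by (simp add: algebra_simps)
    then show ?thesis unfolding D_def by simp
  qed
  have d2: "AE \<omega> in M. cexp M F 0 (\<lambda>\<omega>. a2 \<omega> - a3 \<omega>) \<omega> = cexp M F 0 a2 \<omega> - cexp M F 0 a3 \<omega>"
    by (rule ce_diff[OF t i2 i3])
  have v1: "AE \<omega> in M. vaK\<theta> 0 \<omega> = cQ (min 0 (\<theta> \<omega>)) \<omega> + Q (min 0 (\<theta> \<omega>)) \<omega> - cexp M F 0 (\<lambda>\<omega>. a1 \<omega> + a5 \<omega>) \<omega>"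
    unfolding a1_def a5_def using part3 t by blast
  have v2: "AE \<omega> in M. cexp M F 0 (\<lambda>\<omega>. a1 \<omega> + a5 \<omega>) \<omega> = cexp M F 0 a1 \<omega> + cexp M F 0 a5 \<omega>"
    by (rule ce_add[OF t i1 i5])
  have a52: "AE \<omega> in M. a5 \<omega> = a2 \<omega>"
    using zero_call
  proof eventually_elim
    fix \<omega> assume zc: "ind_before \<tau>s (\<theta> \<omega>) \<omega> * q (\<theta> \<omega>) \<omega> + (1 - ind_before \<tau>s (\<theta> \<omega>) \<omega>) * Q (\<theta> \<omega>) \<omega> = 0"
    show "a5 \<omega> = a2 \<omega>" using zc unfolding a5_def a2_def Jt_def by (auto simp: ind_before_def split: if_splits)
  qed
  have v3: "AE \<omega> in M. cexp M F 0 a5 \<omega> = cexp M F 0 a2 \<omega>" by (rule ce_cong[OF t a52]) measurable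
  have ap3: "AE \<omega> in M. ind_before \<tau>s (\<theta> \<omega>) \<omega> * (Pnsb (\<theta> \<omega>) \<omega> - p (\<theta> \<omega>) \<omega>) = a3 \<omega>"
    using path_pPbad AE_space
  proof eventually_elim
    case (elim \<omega>)
    then have r: "0 \<le> \<theta> \<omega>" "\<theta> \<omega> \<le> T" using th_range by auto
    show ?case using elim r unfolding a3_def Jt_def by (auto simp: ind_before_def)
  qed
  have v4: "AE \<omega> in M. cexp M F 0 (\<lambda>\<omega>. ind_before \<tau>s (\<theta> \<omega>) \<omega> * (Pnsb (\<theta> \<omega>) \<omega> - p (\<theta> \<omega>) \<omega>)) \<omega> = cexp M F 0 a3 \<omega>"
    by (rule ce_cong[OF t ap3]) (unfold ind_before_def, measurable)
  have pp: "AE \<omega> in M. 0 < \<tau>s \<omega> \<longrightarrow> p 0 \<omega> = Pbad 0 \<omega>" using p_Pbad t by blast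
  show ?thesis
    using h2 d2 v1 v2 v3 v4 pp AE_space
  proof eventually_elim
    case (elim \<omega>)
    have \<omega>: "\<omega> \<in> space M" using elim by blast
    have m0: "min 0 (\<theta> \<omega>) = 0" using th_range[OF \<omega>] by simp
    have j0: "ind_before \<tau>s 0 \<omega> = 1" using \<tau>s_pos \<omega> by (simp add: ind_before_def)
    have cQ0: "cQ 0 \<omega> = 0" using cQ \<omega> unfolding cash_flow_def by blast
    have p0: "p 0 \<omega> = Pbad 0 \<omega>" using elim \<tau>s_pos \<omega> by blast
    have "HVA 0 \<omega> = (q 0 \<omega> - Q 0 \<omega> - (Pbad 0 \<omega> - Pnsb 0 \<omega>)) + D 0 \<omega> + vaK\<theta> 0 \<omega>"
      using elim(1) unfolding stopped_def m0 j0 by simp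
    moreover have "vaK\<theta> 0 \<omega> = Q 0 \<omega> - cexp M F 0 (\<lambda>\<omega>. a1 \<omega> + a5 \<omega>) \<omega>" using elim(3) unfolding m0 cQ0 by simp
    ultimately show ?case unfolding d1 a1_def[symmetric] using elim p0 by linarith
  qed
qed

end

theorem proposition3p3:
  fixes M :: "'a measure" and F :: "real \<Rightarrow> 'a measure" and T :: real
    and cQ Q K q p cPbad cPgood Pbad Pnsb h :: "real \<Rightarrow> 'a \<Rightarrow> real"
    and \<tau>s \<theta>star \<tau>star \<theta> :: "'a \<Rightarrow> real"
    and cPnsb PNL HVA D vaK\<theta> :: "real \<Rightarrow> 'a \<Rightarrow> real"
  assumes \<theta>_def: "\<theta> = exit_time \<theta>star \<tau>star \<tau>s"
    and cPnsb_def: "cPnsb = nsb_flow cPbad cPgood \<tau>s \<theta>"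
    and PNL_def: "PNL = pnl_nsb cQ q Q cPnsb p Pnsb h \<tau>s \<theta>"
    and HVA_def: "HVA = (\<lambda>t \<omega>. - va M F T PNL t \<omega>)"
    and D_def: "D = (\<lambda>t. cexp M F t (\<lambda>\<omega>. ind_before \<tau>s (\<theta> \<omega>) \<omega> *
                      (Q (\<theta> \<omega>) \<omega> - (Pnsb (\<theta> \<omega>) \<omega> - Pbad (\<theta> \<omega>) \<omega>))))"
    and vaK\<theta>_def: "vaK\<theta> = va M F T (stopped K \<theta>)"
    and prob: "prob_space M"
    and filt: "usual_filtration M F T"
    and cQ: "cash_flow M F T cQ"
    and Q_reg: "regular_process M F T Q"
    and Q_val: "fair_callable_value M F T cQ Q"
    and K: "is_drift M F T (\<lambda>t \<omega>. cQ t \<omega> + Q t \<omega>) K"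
    and q_semi: "semimartingale M F T q" and q_reg: "regular_process M F T q"
    and q_T: "\<forall>\<omega>\<in>space M. q T \<omega> = 0"
    and p_semi: "semimartingale M F T p" and p_reg: "regular_process M F T p"
    and \<tau>s: "stopping_time_on M F T \<tau>s" and \<tau>s_pos: "\<forall>\<omega>\<in>space M. 0 < \<tau>s \<omega>"
    and cPbad: "cash_flow M F T cPbad" and cPgood: "cash_flow M F T cPgood"
    and Pbad_reg: "regular_process M F T Pbad"
    and Pbad_val: "\<forall>t\<in>{0..T}. AE \<omega> in M. Pbad t \<omega> = va M F T cPbad t \<omega>"
    and p_Pbad: "\<forall>t\<in>{0..T}. AE \<omega> in M. t < \<tau>s \<omega> \<longrightarrow> p t \<omega> = Pbad t \<omega>"
    and \<theta>star: "stopping_time_on M F T \<theta>star" and \<theta>star_le: "\<forall>\<omega>\<in>space M. \<theta>star \<omega> \<le> \<tau>s \<omega>"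
    and \<tau>star: "stopping_time_on M F T \<tau>star" and \<tau>star_ge: "\<forall>\<omega>\<in>space M. \<tau>s \<omega> \<le> \<tau>star \<omega>"
    and \<tau>star_opt: "AE \<omega> in M. real_cond_exp M (stopped_sigma M F T \<tau>s)
                      (\<lambda>\<omega>. cQ (\<tau>star \<omega>) \<omega> - cQ (\<tau>s \<omega>) \<omega>) \<omega> = Q (\<tau>s \<omega>) \<omega>"
    and zero_call: "AE \<omega> in M. ind_before \<tau>s (\<theta> \<omega>) \<omega> * q (\<theta> \<omega>) \<omega>
                      + (1 - ind_before \<tau>s (\<theta> \<omega>) \<omega>) * Q (\<theta> \<omega>) \<omega> = 0"
    and Pnsb_reg: "regular_process M F T Pnsb"
    and Pnsb_val: "\<forall>t\<in>{0..T}. AE \<omega> in M. Pnsb t \<omega> = va M F T cPnsb t \<omega>"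
    and h_mart: "martingale_on M F T h" and h_cadlag: "cadlag_process M T h"
    and h_stop: "\<forall>t\<in>{0..T}. \<forall>\<omega>\<in>space M. h t \<omega> = stopped h \<theta> t \<omega>"
  shows
    "(\<forall>t\<in>{0..T}. AE \<omega> in M. PNL t \<omega> =
        from0 (stopped (\<lambda>t \<omega>. cQ t \<omega> + ind_before \<tau>s t \<omega> * q t \<omega> + (1 - ind_before \<tau>s t \<omega>) * Q t \<omega>) \<theta>) t \<omega>
        - from0 (stopped (\<lambda>t \<omega>. cPnsb t \<omega> + ind_before \<tau>s t \<omega> * Pbad t \<omega> + (1 - ind_before \<tau>s t \<omega>) * Pnsb t \<omega>) \<theta>) t \<omega>
        - h t \<omega>)
   \<and> (\<forall>t\<in>{0..T}. AE \<omega> in M. HVA t \<omega> =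
        stopped (\<lambda>t \<omega>. ind_before \<tau>s t \<omega> * (q t \<omega> - Q t \<omega> - (Pbad t \<omega> - Pnsb t \<omega>))) \<theta> t \<omega>
        + D t \<omega> + vaK\<theta> t \<omega>)
   \<and> (\<forall>t\<in>{0..T}. AE \<omega> in M. vaK\<theta> t \<omega> =
        cQ (min t (\<theta> \<omega>)) \<omega> + Q (min t (\<theta> \<omega>)) \<omega> - cexp M F t (\<lambda>\<omega>. cQ (\<theta> \<omega>) \<omega> + Q (\<theta> \<omega>) \<omega>) \<omega>)
   \<and> (AE \<omega> in M. HVA 0 \<omega> =
        q 0 \<omega> - cexp M F 0 (\<lambda>\<omega>. cQ (\<theta> \<omega>) \<omega>) \<omega> - (p 0 \<omega> - Pnsb 0 \<omega>)
        - cexp M F 0 (\<lambda>\<omega>. ind_before \<tau>s (\<theta> \<omega>) \<omega> * (Pnsb (\<theta> \<omega>) \<omega> - p (\<theta> \<omega>) \<omega>)) \<omega>)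
   \<and> (\<forall>t\<in>{0..T}. AE \<omega> in M. - PNL t \<omega> + (HVA t \<omega> - HVA 0 \<omega>) =
        - from0 (stopped (\<lambda>t \<omega>. cQ t \<omega> + Q t \<omega>) \<theta>) t \<omega>
        + from0 (stopped (\<lambda>t \<omega>. cPnsb t \<omega> + Pnsb t \<omega>) \<theta>) t \<omega>
        + h t \<omega> + from0 D t \<omega> + from0 vaK\<theta> t \<omega>)"
  proof -
  obtain \<omega>0 where w0: "\<omega>0 \<in> space M" using prob_space.not_empty[OF prob] by blast
  have T: "0 < T" using \<tau>s_pos w0 \<tau>s unfolding stopping_time_on_def by force
  interpret nsb M F T cQ Q K q p cPbad cPgood Pbad Pnsb h \<tau>s \<theta>star \<tau>star \<theta> cPnsb PNL HVA D vaK\<theta>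
  proof (intro nsb.intro fsetting.intro fsetting_axioms.intro nsb_axioms.intro)
  qed (fact | rule T)+
  show ?thesis using part1 part2 part3 part4 part5 by blast
qed

end
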